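(* For all integers $m,n\ge 1$, the number $B_m^{(-n)}(3)$ of ternary strong lonesum $m\times n$ matrices equals $$1+\sum_{j=1}^{\min(m,n)}\ \sum_{\substack{(m_0,\ldots,m_j)\in\mathcal{S}_m^j\\ (n_0,\ldots,n_j)\in\mathcal{S}_n^j}}\binom{m}{m_0,m_1,\ldots,m_j}\binom{n}{n_0,n_1,\ldots,n_j}\prod_{i=1}^{j}f_3(m_i,n_{j+1-i}),$$ where $f_3(r,s)=1+rs+r(2^s-s-1)+s(2^r-r-1)$.
   Context: A ternary matrix has entries in $\{0,1,2\}$; a ternary $m\times n$ matrix is a strong lonesum matrix if no other ternary $m\times n$ matrix has the same row sums and column sums. For $j\ge 1$ and $l\ge 1$, $\mathcal{S}_l^j=\{(l_0,l_1,\ldots,l_j)\in\mathbb{Z}^{j+1}: \sum_{i=0}^j l_i=l,\ l_0\ge 0,\ l_i\ge 1 \text{ for } 1\le i\le j\}$. $\binom{l}{l_0,\ldots,l_j}=\frac{l!}{l_0!\cdots l_j!}$ is the multinomial coefficient. *)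

theory Defs
  imports Main
begin

text \<open>A ternary m x n matrix is represented as a function nat => nat => nat with
  entries in {0,1,2} at positions (i,j), i<m, j<n, and 0 elsewhere (so that
  distinct matrices are distinct functions).\<close>
definition ternary_matrices :: "nat \<Rightarrow> nat \<Rightarrow> (nat \<Rightarrow> nat \<Rightarrow> nat) set" where
  "ternary_matrices m n =
     {A. (\<forall>i j. A i j \<le> 2) \<and> (\<forall>i j. (m \<le> i \<or> n \<le> j) \<longrightarrow> A i j = 0)}"

definition row_sum :: "nat \<Rightarrow> (nat \<Rightarrow> nat \<Rightarrow> nat) \<Rightarrow> nat \<Rightarrow> nat" where
  "row_sum n A i = (\<Sum>j<n. A i j)"

definition col_sum :: "nat \<Rightarrow> (nat \<Rightarrow> nat \<Rightarrow> nat) \<Rightarrow> nat \<Rightarrow> nat" where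
  "col_sum m A j = (\<Sum>i<m. A i j)"

definition strong_lonesum :: "nat \<Rightarrow> nat \<Rightarrow> (nat \<Rightarrow> nat \<Rightarrow> nat) \<Rightarrow> bool" where
  "strong_lonesum m n A \<longleftrightarrow> A \<in> ternary_matrices m n \<and>
     (\<forall>B \<in> ternary_matrices m n.
        (\<forall>i<m. row_sum n B i = row_sum n A i) \<and> (\<forall>j<n. col_sum m B j = col_sum m A j)
        \<longrightarrow> B = A)"

definition num_strong_lonesum :: "nat \<Rightarrow> nat \<Rightarrow> nat" where
  "num_strong_lonesum m n = card {A. strong_lonesum m n A}"

definition S_set :: "nat \<Rightarrow> nat \<Rightarrow> nat list set" where
  "S_set l j = {xs. length xs = j + 1 \<and> sum_list xs = l \<and> (\<forall>i\<in>{1..j}. 1 \<le> xs ! i)}"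

definition multinomial :: "nat \<Rightarrow> nat list \<Rightarrow> int" where
  "multinomial l xs = int (fact l div (\<Prod>x\<leftarrow>xs. fact x))"

definition f3 :: "nat \<Rightarrow> nat \<Rightarrow> int" where
  "f3 r s = 1 + int r * int s + int r * (2 ^ s - int s - 1) + int s * (2 ^ r - int r - 1)"

end

theory Submission
  imports Defs "HOL-Library.FuncSet"
begin

definition good :: "nat \<Rightarrow> nat \<Rightarrow> (nat \<Rightarrow> nat \<Rightarrow> nat) \<Rightarrow> bool" where
  "good m n A \<longleftrightarrow> (\<forall>i i' k k'. i < m \<longrightarrow> i' < m \<longrightarrow> k < n \<longrightarrow> k' < n \<longrightarrow> i \<noteq> i' \<longrightarrow> k \<noteq> k' \<longrightarrow>
      \<not> (A i k < 2 \<and> A i' k' < 2 \<and> 0 < A i k' \<and> 0 < A i' k))"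

lemma sum_two_change:
  fixes f g :: "nat \<Rightarrow> nat"
  assumes "k < n" "k' < n" "k \<noteq> k'" "g k = f k + 1" "f k' > 0" "g k' = f k' - 1"
    "\<And>y. y \<noteq> k \<Longrightarrow> y \<noteq> k' \<Longrightarrow> g y = f y"
  shows "(\<Sum>y<n. g y) = (\<Sum>y<n. f y)"
proof -
  have e: "{..<n} = insert k (insert k' ({..<n} - {k,k'}))" using assms by auto
  have "(\<Sum>y<n. g y) = g k + (g k' + (\<Sum>y\<in>{..<n} - {k,k'}. g y))"
    by (subst e, subst sum.insert, auto simp: assms(3))
  also have "(\<Sum>y\<in>{..<n} - {k,k'}. g y) = (\<Sum>y\<in>{..<n} - {k,k'}. f y)"
    by (rule sum.cong) (auto simp: assms(7))
  also have "(\<Sum>y<n. f y) = f k + (f k' + (\<Sum>y\<in>{..<n} - {k,k'}. f y))"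
    by (subst e, subst sum.insert, auto simp: assms(3))
  ultimately show ?thesis using assms(4-6) by simp
qed

lemma strong_good:
  assumes "strong_lonesum m n A"
  shows "good m n A"
  unfolding good_def
proof (intro allI impI notI)
  fix i i' k k'
  assume r: "i < m" "i' < m" "k < n" "k' < n" "i \<noteq> i'" "k \<noteq> k'"
    and b: "A i k < 2 \<and> A i' k' < 2 \<and> 0 < A i k' \<and> 0 < A i' k"
  have At: "A \<in> ternary_matrices m n" and un: "\<forall>B \<in> ternary_matrices m n.
        (\<forall>i<m. row_sum n B i = row_sum n A i) \<and> (\<forall>j<n. col_sum m B j = col_sum m A j)
        \<longrightarrow> B = A" using assms unfolding strong_lonesum_def by auto
  define B where "B = (\<lambda>x y. if (x = i \<and> y = k) \<or> (x = i' \<and> y = k') then A x y + 1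
      else if (x = i \<and> y = k') \<or> (x = i' \<and> y = k) then A x y - 1 else A x y)"
  have "B \<in> ternary_matrices m n"
    using At b r unfolding ternary_matrices_def B_def by (auto intro: le_trans[OF diff_le_self])
  moreover have "\<forall>x<m. row_sum n B x = row_sum n A x"
  proof (intro allI impI)
    fix x assume "x < m"
    show "row_sum n B x = row_sum n A x"
    proof (cases "x = i \<or> x = i'")
      case True
      then show ?thesis
      proof
        assume "x = i"
        then show ?thesis unfolding row_sum_def
          by (intro sum_two_change[of k n k']) (use r b in \<open>auto simp: B_def\<close>)
      next
        assume "x = i'"
        then show ?thesis unfolding row_sum_def
          by (intro sum_two_change[of k' n k]) (use r b in \<open>auto simp: B_def\<close>)
      qed
    next
      case False
      then show ?thesis unfolding row_sum_def B_def by auto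
    qed
  qed
  moreover have "\<forall>y<n. col_sum m B y = col_sum m A y"
  proof (intro allI impI)
    fix y assume "y < n"
    show "col_sum m B y = col_sum m A y"
    proof (cases "y = k \<or> y = k'")
      case True
      then show ?thesis
      proof
        assume "y = k"
        then show ?thesis unfolding col_sum_def
          by (intro sum_two_change[of i m i']) (use r b in \<open>auto simp: B_def\<close>)
      next
        assume "y = k'"
        then show ?thesis unfolding col_sum_def
          by (intro sum_two_change[of i' m i]) (use r b in \<open>auto simp: B_def\<close>)
      qed
    next
      case False
      then show ?thesis unfolding col_sum_def B_def by auto
    qed
  qed
  ultimately have "B = A" using un by blast
  hence "B i k = A i k" by simp
  thus False unfolding B_def by simp
qed


definition lvS :: "nat \<Rightarrow> (nat \<Rightarrow> nat \<Rightarrow> nat) \<Rightarrow> nat \<Rightarrow> nat set" where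
  "lvS n A i = {k. k < n \<and> 0 < A i k}"
definition fam :: "nat \<Rightarrow> nat \<Rightarrow> (nat \<Rightarrow> nat \<Rightarrow> nat) \<Rightarrow> nat set set" where
  "fam m n A = {lvS n A i | i. i < m \<and> lvS n A i \<noteq> {}}"
definition lj :: "nat \<Rightarrow> nat \<Rightarrow> (nat \<Rightarrow> nat \<Rightarrow> nat) \<Rightarrow> nat" where
  "lj m n A = card (fam m n A)"
definition la :: "nat \<Rightarrow> nat \<Rightarrow> (nat \<Rightarrow> nat \<Rightarrow> nat) \<Rightarrow> nat \<Rightarrow> nat" where
  "la m n A = restrict (\<lambda>i. if lvS n A i = {} then 0 else card {T \<in> fam m n A. lvS n A i \<subseteq> T}) {..<m}"
definition lc :: "nat \<Rightarrow> nat \<Rightarrow> (nat \<Rightarrow> nat \<Rightarrow> nat) \<Rightarrow> nat \<Rightarrow> nat" where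
  "lc m n A k = card {T \<in> fam m n A. k \<in> T}"
definition lb :: "nat \<Rightarrow> nat \<Rightarrow> (nat \<Rightarrow> nat \<Rightarrow> nat) \<Rightarrow> nat \<Rightarrow> nat" where
  "lb m n A = restrict (\<lambda>k. if lc m n A k = 0 then 0 else lj m n A + 1 - lc m n A k) {..<n}"

definition high :: "nat \<Rightarrow> (nat \<Rightarrow> nat) \<Rightarrow> (nat \<Rightarrow> nat) \<Rightarrow> nat \<Rightarrow> nat \<Rightarrow> bool" where
  "high j a b i k \<longleftrightarrow> 1 \<le> a i \<and> 1 \<le> b k \<and> a i + b k \<le> j"
definition bdry :: "nat \<Rightarrow> (nat \<Rightarrow> nat) \<Rightarrow> (nat \<Rightarrow> nat) \<Rightarrow> nat \<Rightarrow> nat \<Rightarrow> bool" where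
  "bdry j a b i k \<longleftrightarrow> 1 \<le> a i \<and> 1 \<le> b k \<and> a i + b k = j + 1"

definition validP :: "nat \<Rightarrow> nat \<Rightarrow> nat \<Rightarrow> (nat \<Rightarrow> nat) \<Rightarrow> (nat \<Rightarrow> nat) \<Rightarrow> bool" where
  "validP m n j a b \<longleftrightarrow> a \<in> {..<m} \<rightarrow>\<^sub>E {0..j} \<and> b \<in> {..<n} \<rightarrow>\<^sub>E {0..j} \<and>
     {1..j} \<subseteq> a ` {..<m} \<and> {1..j} \<subseteq> b ` {..<n}"

definition fits :: "nat \<Rightarrow> nat \<Rightarrow> nat \<Rightarrow> (nat \<Rightarrow> nat) \<Rightarrow> (nat \<Rightarrow> nat) \<Rightarrow> (nat \<Rightarrow> nat \<Rightarrow> nat) \<Rightarrow> bool" where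
  "fits m n j a b A \<longleftrightarrow> A \<in> ternary_matrices m n \<and>
     (\<forall>i<m. \<forall>k<n. (high j a b i k \<longrightarrow> A i k = 2) \<and> (bdry j a b i k \<longrightarrow> 1 \<le> A i k) \<and>
        (\<not> high j a b i k \<and> \<not> bdry j a b i k \<longrightarrow> A i k = 0)) \<and>
     (\<forall>i<m. \<forall>i'<m. \<forall>k<n. \<forall>k'<n. bdry j a b i k \<and> bdry j a b i' k' \<and> a i = a i' \<and>
        A i k = 1 \<and> A i' k' = 1 \<longrightarrow> i = i' \<or> k = k')"

context
  fixes m n :: nat and A :: "nat \<Rightarrow> nat \<Rightarrow> nat"
  assumes tern: "A \<in> ternary_matrices m n" and gd: "good m n A"
begin

private abbreviation "S \<equiv> lvS n A"
private abbreviation "F \<equiv> fam m n A"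
private abbreviation "j \<equiv> lj m n A"

private lemma chain: "i < m \<Longrightarrow> i' < m \<Longrightarrow> S i \<subseteq> S i' \<or> S i' \<subseteq> S i"
proof (rule ccontr)
  assume im: "i < m" "i' < m" and "\<not> (S i \<subseteq> S i' \<or> S i' \<subseteq> S i)"
  then obtain k k' where k: "k \<in> S i" "k \<notin> S i'" and k': "k' \<in> S i'" "k' \<notin> S i" by blast
  have "k < n" "k' < n" "0 < A i k" "0 < A i' k'" "A i' k = 0" "A i k' = 0"
    using k k' unfolding lvS_def by auto
  moreover have "i \<noteq> i'" "k \<noteq> k'" using k k' by auto
  moreover have "\<not> (A i k' < 2 \<and> A i' k < 2 \<and> 0 < A i k \<and> 0 < A i' k')"
    using gd im \<open>k < n\<close> \<open>k' < n\<close> \<open>i \<noteq> i'\<close> \<open>k \<noteq> k'\<close> unfolding good_def by blast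
  ultimately show False by simp
qed

private lemma finF: "finite F"
proof -
  have "F \<subseteq> S ` {..<m}" unfolding fam_def by auto
  thus ?thesis by (rule finite_subset) auto
qed

private lemma memF: "T \<in> F \<Longrightarrow> \<exists>i<m. T = S i \<and> S i \<noteq> {}"
  unfolding fam_def by auto

private lemma inF: "i < m \<Longrightarrow> S i \<noteq> {} \<Longrightarrow> S i \<in> F"
  unfolding fam_def by auto

private lemma chainF: "T \<in> F \<Longrightarrow> T' \<in> F \<Longrightarrow> T \<subseteq> T' \<or> T' \<subseteq> T"
proof -
  assume "T \<in> F" "T' \<in> F"
  then obtain i i' where "i < m" "T = S i" "i' < m" "T' = S i'" using memF by blast
  thus ?thesis using chain by blast
qed

private lemma subn: "T \<in> F \<Longrightarrow> T \<subseteq> {..<n}"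
  using memF unfolding lvS_def by fastforce

definition alpha where "alpha T = card {T' \<in> F. T \<subseteq> T'}"

private lemma la_eq: "i < m \<Longrightarrow> la m n A i = (if S i = {} then 0 else alpha (S i))"
  unfolding la_def alpha_def by simp

private lemma alpha_range: "T \<in> F \<Longrightarrow> alpha T \<in> {1..j}"
proof -
  assume T: "T \<in> F"
  have "{T' \<in> F. T \<subseteq> T'} \<subseteq> F" by auto
  hence 1: "alpha T \<le> j" unfolding alpha_def lj_def by (intro card_mono finF)
  have 2: "T \<in> {T' \<in> F. T \<subseteq> T'}" using T by auto
  have 3: "finite {T' \<in> F. T \<subseteq> T'}" using finF by simp
  have "alpha T \<ge> 1" unfolding alpha_def using 2 3
    by (metis One_nat_def Suc_leI card_gt_0_iff empty_iff)
  thus ?thesis using 1 by auto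
qed

private lemma alpha_strict: "T \<in> F \<Longrightarrow> T' \<in> F \<Longrightarrow> T \<subset> T' \<Longrightarrow> alpha T' < alpha T"
proof -
  assume T: "T \<in> F" "T' \<in> F" "T \<subset> T'"
  have "{T'' \<in> F. T' \<subseteq> T''} \<subset> {T'' \<in> F. T \<subseteq> T''}" using T by auto
  thus ?thesis unfolding alpha_def by (intro psubset_card_mono) (auto intro: finite_subset[OF _ finF])
qed

private lemma alpha_inj: "inj_on alpha F"
proof (rule inj_onI)
  fix T T' assume T: "T \<in> F" "T' \<in> F" "alpha T = alpha T'"
  show "T = T'"
  proof (rule ccontr)
    assume "T \<noteq> T'"
    with chainF[OF T(1,2)] have "T \<subset> T' \<or> T' \<subset> T" by auto
    thus False using alpha_strict T by fastforce
  qed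
qed

private lemma alpha_img: "alpha ` F = {1..j}"
proof (rule card_subset_eq)
  show "finite {1..j}" by simp
  show "alpha ` F \<subseteq> {1..j}" using alpha_range by auto
  show "card (alpha ` F) = card {1..j}" using card_image[OF alpha_inj] unfolding lj_def by simp
qed

private lemma lc_le: "lc m n A k \<le> j"
  unfolding lc_def lj_def by (intro card_mono finF) auto

private lemma supp_fwd:
  assumes "i < m" "k < n" "0 < A i k"
  shows "1 \<le> la m n A i \<and> 1 \<le> lb m n A k \<and> la m n A i + lb m n A k \<le> j + 1"
proof -
  have kS: "k \<in> S i" using assms unfolding lvS_def by auto
  hence ne: "S i \<noteq> {}" by auto
  have SF: "S i \<in> F" using inF[OF assms(1) ne] .
  have a: "la m n A i = alpha (S i)" using la_eq[OF assms(1)] ne by simp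
  have a1: "alpha (S i) \<ge> 1" using alpha_range[OF SF] by simp
  have sub: "{T \<in> F. S i \<subseteq> T} \<subseteq> {T \<in> F. k \<in> T}" using kS by auto
  have ac: "alpha (S i) \<le> lc m n A k" unfolding alpha_def lc_def
    by (intro card_mono sub) (auto intro: finite_subset[OF _ finF])
  have c1: "lc m n A k \<ge> 1" using a1 ac by simp
  have b: "lb m n A k = j + 1 - lc m n A k" using c1 assms(2) unfolding lb_def by simp
  show ?thesis using a a1 ac c1 b lc_le[of k] by (simp; arith)
qed

private lemma supp_bwd:
  assumes "i < m" "k < n" "1 \<le> la m n A i" "1 \<le> lb m n A k" "la m n A i + lb m n A k \<le> j + 1"
  shows "0 < A i k"
proof (rule ccontr)
  assume "\<not> 0 < A i k"
  hence kS: "k \<notin> S i" unfolding lvS_def by auto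
  have ne: "S i \<noteq> {}" using assms(1,3) la_eq by fastforce
  have SF: "S i \<in> F" using inF[OF assms(1) ne] .
  have a: "la m n A i = alpha (S i)" using la_eq[OF assms(1)] ne by simp
  have c1: "lc m n A k \<noteq> 0" using assms(2,4) unfolding lb_def by (auto split: if_splits)
  have b: "lb m n A k = j + 1 - lc m n A k" using c1 assms(2) unfolding lb_def by simp
  have sub: "{T \<in> F. k \<in> T} \<subseteq> {T \<in> F. S i \<subseteq> T} - {S i}"
  proof
    fix T assume T: "T \<in> {T \<in> F. k \<in> T}"
    hence "T \<in> F" "k \<in> T" by auto
    with chainF[OF this(1) SF] kS show "T \<in> {T \<in> F. S i \<subseteq> T} - {S i}" by auto
  qed
  have "lc m n A k \<le> card ({T \<in> F. S i \<subseteq> T} - {S i})" unfolding lc_def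
    by (intro card_mono sub) (auto intro: finite_subset[OF _ finF])
  also have "\<dots> = alpha (S i) - 1" unfolding alpha_def using SF
    by (subst card_Diff_singleton) (auto intro: finite_subset[OF _ finF])
  finally show False using assms(5) a b lc_le[of k] c1 by simp
qed

private lemma supp:
  "i < m \<Longrightarrow> k < n \<Longrightarrow> 0 < A i k \<longleftrightarrow> (1 \<le> la m n A i \<and> 1 \<le> lb m n A k \<and> la m n A i + lb m n A k \<le> j + 1)"
  using supp_fwd supp_bwd by blast

private lemma exists_col: "T \<in> F \<Longrightarrow> \<exists>k<n. lc m n A k = alpha T"
proof -
  assume TF: "T \<in> F"
  define U where "U = {U \<in> F. U \<subset> T}"
  have finU: "finite U" unfolding U_def by (auto intro: finite_subset[OF _ finF])
  have "\<exists>k\<in>T. \<forall>T'\<in>F. k \<in> T' \<longrightarrow> T \<subseteq> T'"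
  proof (cases "U = {}")
    case True
    obtain k where "k \<in> T" using TF memF by blast
    moreover have "\<forall>T'\<in>F. k \<in> T' \<longrightarrow> T \<subseteq> T'"
      using True chainF[OF TF] unfolding U_def by blast
    ultimately show ?thesis by blast
  next
    case False
    have fc: "finite (card ` U)" "card ` U \<noteq> {}" using finU False by auto
    obtain U0 where U0a: "U0 \<in> U" "card U0 = Max (card ` U)" using Max_in[OF fc] by auto
    have U0: "U0 \<in> U" "\<forall>U'\<in>U. card U' \<le> card U0"
      using U0a Max_ge[OF fc(1)] by auto
    have "U0 \<subset> T" using U0 unfolding U_def by auto
    then obtain k where k: "k \<in> T" "k \<notin> U0" by blast
    have "\<forall>T'\<in>F. k \<in> T' \<longrightarrow> T \<subseteq> T'"
    proof (intro ballI impI)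
      fix T' assume T': "T' \<in> F" "k \<in> T'"
      show "T \<subseteq> T'"
      proof (rule ccontr)
        assume "\<not> T \<subseteq> T'"
        hence "T' \<subset> T" using chainF[OF TF T'(1)] by auto
        hence T'U: "T' \<in> U" unfolding U_def using T' by auto
        have U0F: "U0 \<in> F" using U0 unfolding U_def by auto
        have finT': "finite T'" using subn[OF T'(1)] finite_subset by blast
        from chainF[OF T'(1) U0F] show False
        proof
          assume "T' \<subseteq> U0" thus False using k T' by auto
        next
          assume "U0 \<subseteq> T'"
          hence "U0 \<subset> T'" using k T' by auto
          hence "card U0 < card T'" using finT' psubset_card_mono by blast
          thus False using U0(2) T'U by fastforce
        qed
      qed
    qed
    thus ?thesis using k by blast
  qed
  then obtain k where k: "k \<in> T" "\<forall>T'\<in>F. k \<in> T' \<longrightarrow> T \<subseteq> T'" by blast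
  have "{T' \<in> F. k \<in> T'} = {T' \<in> F. T \<subseteq> T'}" using k by auto
  hence "lc m n A k = alpha T" unfolding lc_def alpha_def by simp
  moreover have "k < n" using subn[OF TF] k by auto
  ultimately show ?thesis by blast
qed

private lemma la_surj: "{1..j} \<subseteq> la m n A ` {..<m}"
proof
  fix l assume "l \<in> {1..j}"
  hence "l \<in> alpha ` F" unfolding alpha_img .
  then obtain T where T: "T \<in> F" "alpha T = l" by blast
  then obtain i where i: "i < m" "T = S i" "S i \<noteq> {}" using memF by blast
  have "la m n A i = l" using la_eq[OF i(1)] i T by simp
  thus "l \<in> la m n A ` {..<m}" using i by auto
qed

private lemma lb_surj: "{1..j} \<subseteq> lb m n A ` {..<n}"
proof
  fix l assume l: "l \<in> {1..j}"
  hence "j + 1 - l \<in> alpha ` F" unfolding alpha_img by auto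
  then obtain T where T: "j + 1 - l = alpha T" "T \<in> F" by (rule imageE)
  from exists_col[OF T(2)] obtain k where k0: "k < n" "lc m n A k = alpha T" by blast
  have k: "k < n" "lc m n A k = j + 1 - l" using k0 T(1) by auto
  have l1: "1 \<le> l" "l \<le> j" using l by auto
  have "lb m n A k = j + 1 - (j + 1 - l)" using k l1 unfolding lb_def by simp
  hence "lb m n A k = l" using l1 by simp
  thus "l \<in> lb m n A ` {..<n}" using k by auto
qed

private lemma la_le: "i < m \<Longrightarrow> la m n A i \<le> j"
proof -
  assume i: "i < m"
  show ?thesis
  proof (cases "S i = {}")
    case True thus ?thesis using la_eq[OF i] by simp
  next
    case False
    have "alpha (S i) \<in> {1..j}" by (rule alpha_range[OF inF[OF i False]])
    thus ?thesis using la_eq[OF i] False by simp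
  qed
qed

private lemma lb_le: "k < n \<Longrightarrow> lb m n A k \<le> j"
  unfolding lb_def using lc_le[of k] by auto

lemma existence_valid: "validP m n (lj m n A) (la m n A) (lb m n A)"
  unfolding validP_def
proof (intro conjI la_surj lb_surj)
  show "la m n A \<in> {..<m} \<rightarrow>\<^sub>E {0..j}" unfolding PiE_iff
  proof
    show "\<forall>i\<in>{..<m}. la m n A i \<in> {0..j}" using la_le by simp
    show "la m n A \<in> extensional {..<m}" unfolding la_def by simp
  qed
  show "lb m n A \<in> {..<n} \<rightarrow>\<^sub>E {0..j}" unfolding PiE_iff
  proof
    show "\<forall>i\<in>{..<n}. lb m n A i \<in> {0..j}" using lb_le by simp
    show "lb m n A \<in> extensional {..<n}" unfolding lb_def by simp
  qed
qed

lemma existence_fits: "fits m n (lj m n A) (la m n A) (lb m n A) A"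
  unfolding fits_def
proof (intro conjI allI impI)
  show "A \<in> ternary_matrices m n" by (rule tern)
next
  fix i k assume ik: "i < m" "k < n" and h: "high j (la m n A) (lb m n A) i k"
  let ?a = "la m n A" and ?b = "lb m n A"
  from h have h': "1 \<le> ?a i" "1 \<le> ?b k" "?a i + ?b k \<le> j" unfolding high_def by auto
  have "j + 1 - ?b k \<in> {1..j}" using h' by auto
  then obtain i' where i': "i' < m" "?a i' = j + 1 - ?b k" using la_surj by (metis imageE lessThan_iff subsetD)
  have "j + 1 - ?a i \<in> {1..j}" using h' by auto
  then obtain k' where k': "k' < n" "?b k' = j + 1 - ?a i" using lb_surj by (metis imageE lessThan_iff subsetD)
  have p1: "0 < A i k'" using supp[OF ik(1) k'(1)] k' h' by auto
  have p2: "0 < A i' k" using supp[OF i'(1) ik(2)] i' h' by auto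
  have p3: "\<not> 0 < A i' k'" using supp[OF i'(1) k'(1)] i' k' h' by auto
  have ne: "i \<noteq> i'" "k \<noteq> k'" using i' k' h' by auto
  have "\<not> (A i k < 2 \<and> A i' k' < 2 \<and> 0 < A i k' \<and> 0 < A i' k)"
    using gd ik i' k' ne unfolding good_def by blast
  hence "\<not> A i k < 2" using p1 p2 p3 by auto
  moreover have "A i k \<le> 2" using tern unfolding ternary_matrices_def by auto
  ultimately show "A i k = 2" by simp
next
  fix i k assume ik: "i < m" "k < n" and h: "bdry j (la m n A) (lb m n A) i k"
  thus "1 \<le> A i k" using supp[OF ik] unfolding bdry_def by auto
next
  fix i k assume ik: "i < m" "k < n" and h: "\<not> high j (la m n A) (lb m n A) i k \<and> \<not> bdry j (la m n A) (lb m n A) i k"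
  thus "A i k = 0" using supp[OF ik] unfolding bdry_def high_def by auto
next
  fix i i' k k' assume r: "i < m" "i' < m" "k < n" "k' < n" and
    c: "bdry j (la m n A) (lb m n A) i k \<and> bdry j (la m n A) (lb m n A) i' k' \<and>
        la m n A i = la m n A i' \<and> A i k = 1 \<and> A i' k' = 1"
  have "0 < A i k'" using supp[OF r(1) r(4)] c unfolding bdry_def by auto
  moreover have "0 < A i' k" using supp[OF r(2) r(3)] c unfolding bdry_def by auto
  moreover have "\<not> (A i k < 2 \<and> A i' k' < 2 \<and> 0 < A i k' \<and> 0 < A i' k)" if "i \<noteq> i'" "k \<noteq> k'"
    using gd r that unfolding good_def by blast
  ultimately show "i = i' \<or> k = k'" using c by auto
qed

lemma existence_bound: "lj m n A \<le> min m n"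
proof -
  have "card {1..j} \<le> card (la m n A ` {..<m})" by (intro card_mono la_surj) auto
  also have "\<dots> \<le> m" using card_image_le[of "{..<m}" "la m n A"] by simp
  finally have 1: "j \<le> m" by simp
  have "card {1..j} \<le> card (lb m n A ` {..<n})" by (intro card_mono lb_surj) auto
  also have "\<dots> \<le> n" using card_image_le[of "{..<n}" "lb m n A"] by simp
  finally have 2: "j \<le> n" by simp
  from 1 2 show ?thesis by simp
qed

end


lemma fits_supp:
  assumes "fits m n j a b A" "i < m" "k < n"
  shows "0 < A i k \<longleftrightarrow> (1 \<le> a i \<and> 1 \<le> b k \<and> a i + b k \<le> j + 1)"
proof -
  have h: "high j a b i k \<longrightarrow> A i k = 2" "bdry j a b i k \<longrightarrow> 1 \<le> A i k"
    "\<not> high j a b i k \<and> \<not> bdry j a b i k \<longrightarrow> A i k = 0"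
    using assms unfolding fits_def by auto
  show ?thesis
  proof (cases "high j a b i k")
    case True thus ?thesis using h unfolding high_def by auto
  next
    case False
    show ?thesis
    proof (cases "bdry j a b i k")
      case True thus ?thesis using h unfolding bdry_def by auto
    next
      case False2: False
      thus ?thesis using h False unfolding bdry_def high_def by auto
    qed
  qed
qed

context
  fixes m n j :: nat and a b :: "nat \<Rightarrow> nat" and A :: "nat \<Rightarrow> nat \<Rightarrow> nat"
  assumes vp: "validP m n j a b" and ft: "fits m n j a b A"
begin

definition RR where "RR l = {k. k < n \<and> 1 \<le> b k \<and> b k + l \<le> j + 1}"

private lemma aPi3: "a \<in> {..<m} \<rightarrow>\<^sub>E {0..j}" and bPi3: "b \<in> {..<n} \<rightarrow>\<^sub>E {0..j}"
  and asurj3: "{1..j} \<subseteq> a ` {..<m}" and bsurj3: "{1..j} \<subseteq> b ` {..<n}"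
  using vp unfolding validP_def by blast+

private lemma ale3: "i < m \<Longrightarrow> a i \<le> j" using PiE_mem[OF aPi3, of i] by simp
private lemma ble3: "k < n \<Longrightarrow> b k \<le> j" using PiE_mem[OF bPi3, of k] by simp

private lemma lvS_eq: "i < m \<Longrightarrow> lvS n A i = (if a i = 0 then {} else RR (a i))"
proof -
  assume i: "i < m"
  have "k \<in> lvS n A i \<longleftrightarrow> k \<in> (if a i = 0 then {} else RR (a i))" for k
  proof (cases "k < n")
    case True
    show ?thesis using fits_supp[OF ft i True] True unfolding lvS_def RR_def by auto
  next
    case False thus ?thesis unfolding lvS_def RR_def by auto
  qed
  thus ?thesis by blast
qed

private lemma getb: "l \<in> {1..j} \<Longrightarrow> \<exists>k<n. b k = l"
proof -
  assume "l \<in> {1..j}"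
  hence "l \<in> b ` {..<n}" using bsurj3 by blast
  then obtain x where "l = b x" "x \<in> {..<n}" by (rule imageE)
  thus ?thesis by auto
qed

private lemma geta: "l \<in> {1..j} \<Longrightarrow> \<exists>i<m. a i = l"
proof -
  assume "l \<in> {1..j}"
  hence "l \<in> a ` {..<m}" using asurj3 by blast
  then obtain x where "l = a x" "x \<in> {..<m}" by (rule imageE)
  thus ?thesis by auto
qed

private lemma RR_ne: "l \<in> {1..j} \<Longrightarrow> RR l \<noteq> {}"
proof -
  assume l: "l \<in> {1..j}"
  obtain k where "k < n" "b k = 1" using getb[of 1] l by auto
  hence "k \<in> RR l" using l unfolding RR_def by auto
  thus ?thesis by auto
qed

private lemma RR_sub: "l \<in> {1..j} \<Longrightarrow> l' \<in> {1..j} \<Longrightarrow> RR l \<subseteq> RR l' \<longleftrightarrow> l' \<le> l"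
proof
  assume l: "l \<in> {1..j}" "l' \<in> {1..j}" and s: "RR l \<subseteq> RR l'"
  show "l' \<le> l"
  proof (rule ccontr)
    assume "\<not> l' \<le> l"
    have "j + 1 - l \<in> {1..j}" using l by auto
    then obtain k where k: "k < n" "b k = j + 1 - l" using getb by blast
    have "k \<in> RR l" using k l unfolding RR_def by auto
    moreover have "k \<notin> RR l'" using k l \<open>\<not> l' \<le> l\<close> unfolding RR_def by auto
    ultimately show False using s by auto
  qed
next
  assume "l' \<le> l" thus "RR l \<subseteq> RR l'" unfolding RR_def by auto
qed

private lemma RR_inj: "inj_on RR {1..j}"
proof (rule inj_onI)
  fix l l' assume l: "l \<in> {1..j}" "l' \<in> {1..j}" "RR l = RR l'"
  have "l' \<le> l" using RR_sub[OF l(1,2)] l(3) by simp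
  moreover have "l \<le> l'" using RR_sub[OF l(2,1)] l(3) by simp
  ultimately show "l = l'" by simp
qed

private lemma fam_eq: "fam m n A = RR ` {1..j}"
proof
  show "fam m n A \<subseteq> RR ` {1..j}"
  proof
    fix T assume "T \<in> fam m n A"
    then obtain i where i: "i < m" "T = lvS n A i" "lvS n A i \<noteq> {}" unfolding fam_def by auto
    hence "a i \<noteq> 0" using lvS_eq by auto
    moreover have "a i \<le> j" using ale3 i by auto
    ultimately show "T \<in> RR ` {1..j}" using i lvS_eq[OF i(1)] by auto
  qed
next
  show "RR ` {1..j} \<subseteq> fam m n A"
  proof
    fix T assume "T \<in> RR ` {1..j}"
    then obtain l where l: "l \<in> {1..j}" "T = RR l" by auto
    obtain i where i: "i < m" "a i = l" using geta[OF l(1)] by auto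
    have "lvS n A i = T" using lvS_eq[OF i(1)] i l by auto
    moreover have "lvS n A i \<noteq> {}" using calculation l RR_ne by auto
    ultimately show "T \<in> fam m n A" unfolding fam_def using i(1) by blast
  qed
qed

private lemma img_filter: "{T \<in> RR ` X. P T} = RR ` {x \<in> X. P (RR x)}" by auto

lemma uniq_j: "lj m n A = j"
  unfolding lj_def fam_eq using card_image[OF RR_inj] by simp

lemma uniq_a: "la m n A = a"
proof
  fix i
  show "la m n A i = a i"
  proof (cases "i < m")
    case False
    thus ?thesis using aPi3 unfolding la_def by (auto simp: PiE_def extensional_def)
  next
    case True
    show ?thesis
    proof (cases "a i = 0")
      case True2: True
      thus ?thesis using True lvS_eq[OF True] unfolding la_def by simp
    next
      case False
      have ai: "a i \<in> {1..j}" using False ale3[OF True] by auto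
      have "{T \<in> fam m n A. RR (a i) \<subseteq> T} = RR ` {l \<in> {1..j}. RR (a i) \<subseteq> RR l}"
        unfolding fam_eq by auto
      also have "{l \<in> {1..j}. RR (a i) \<subseteq> RR l} = {1..a i}"
      proof (rule set_eqI)
        fix l
        show "l \<in> {l \<in> {1..j}. RR (a i) \<subseteq> RR l} \<longleftrightarrow> l \<in> {1..a i}"
        proof (cases "l \<in> {1..j}")
          case True thus ?thesis using RR_sub[OF ai True] by auto
        next
          case False thus ?thesis using ai by auto
        qed
      qed
      finally have e: "{T \<in> fam m n A. RR (a i) \<subseteq> T} = RR ` {1..a i}" .
      have "card (RR ` {1..a i}) = a i"
        using card_image[OF inj_on_subset[OF RR_inj, of "{1..a i}"]] ai by auto
      thus ?thesis using True False lvS_eq[OF True] RR_ne[OF ai] e unfolding la_def by simp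
    qed
  qed
qed

lemma uniq_b: "lb m n A = b"
proof
  fix k
  show "lb m n A k = b k"
  proof (cases "k < n")
    case False
    thus ?thesis using bPi3 unfolding lb_def by (auto simp: PiE_def extensional_def)
  next
    case True
    have "{T \<in> fam m n A. k \<in> T} = RR ` {l \<in> {1..j}. k \<in> RR l}"
      unfolding fam_eq by auto
    hence "lc m n A k = card (RR ` {l \<in> {1..j}. k \<in> RR l})" unfolding lc_def by simp
    also have "\<dots> = card {l \<in> {1..j}. k \<in> RR l}"
      by (rule card_image[OF inj_on_subset[OF RR_inj]]) auto
    finally have lc: "lc m n A k = card {l \<in> {1..j}. k \<in> RR l}" .
    show ?thesis
    proof (cases "b k = 0")
      case True2: True
      have "{l \<in> {1..j}. k \<in> RR l} = {}" using True2 unfolding RR_def by auto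
      thus ?thesis using lc True True2 unfolding lb_def by simp
    next
      case False
      have bk: "b k \<le> j" using ble3[OF True] .
      have "{l \<in> {1..j}. k \<in> RR l} = {1..j + 1 - b k}" using True False bk unfolding RR_def by auto
      hence "lc m n A k = j + 1 - b k" using lc by simp
      thus ?thesis using True False bk unfolding lb_def uniq_j by simp
    qed
  qed
qed

end


lemma exists_neg:
  fixes f :: "nat \<Rightarrow> int"
  assumes "finite S" "x \<in> S" "f x > 0" "sum f S = 0"
  shows "\<exists>y\<in>S. f y < 0"
proof (rule ccontr)
  assume "\<not> (\<exists>y\<in>S. f y < 0)"
  hence "\<forall>y\<in>S. 0 \<le> f y" by auto
  hence "f x \<le> sum f S" using assms(1,2) by (intro member_le_sum) auto
  thus False using assms by simp
qed

lemma exists_pos: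
  fixes f :: "nat \<Rightarrow> int"
  assumes "finite S" "x \<in> S" "f x < 0" "sum f S = 0"
  shows "\<exists>y\<in>S. f y > 0"
  using exists_neg[of S x "\<lambda>y. - f y"] assms by (auto simp: sum_negf)

lemma double_sum_nonpos_zero:
  fixes g :: "nat \<Rightarrow> nat \<Rightarrow> int"
  assumes "\<And>i k. i < m \<Longrightarrow> k < n \<Longrightarrow> g i k \<le> 0" "(\<Sum>i<m. \<Sum>k<n. g i k) = 0"
    "i < m" "k < n"
  shows "g i k = 0"
proof -
  have inner: "\<And>i. i < m \<Longrightarrow> (\<Sum>k<n. g i k) \<le> 0" using assms(1) by (intro sum_nonpos) auto
  have "(\<Sum>k<n. g i k) = 0"
  proof (rule ccontr)
    assume ne: "(\<Sum>k<n. g i k) \<noteq> 0"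
    hence lt: "(\<Sum>k<n. g i k) < 0" using inner[OF assms(3)] by simp
    have "(\<Sum>i'<m. \<Sum>k<n. g i' k) \<le> (\<Sum>k<n. g i k)"
    proof -
      have "(\<Sum>i'<m. \<Sum>k<n. g i' k) = (\<Sum>k<n. g i k) + (\<Sum>i'\<in>{..<m} - {i}. \<Sum>k<n. g i' k)"
        using assms(3) by (subst sum.remove[of _ i]) auto
      moreover have "(\<Sum>i'\<in>{..<m} - {i}. \<Sum>k<n. g i' k) \<le> 0" by (rule sum_nonpos) (simp add: inner)
      ultimately show ?thesis by simp
    qed
    thus False using lt assms(2) by simp
  qed
  have "g i k = 0"
  proof (rule ccontr)
    assume "g i k \<noteq> 0"
    hence lt: "g i k < 0" using assms(1)[OF assms(3,4)] by simp
    have "(\<Sum>k'<n. g i k') = g i k + (\<Sum>k'\<in>{..<n} - {k}. g i k')"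
      using assms(4) by (subst sum.remove[of _ k]) auto
    moreover have "(\<Sum>k'\<in>{..<n} - {k}. g i k') \<le> 0" using assms(1)[OF assms(3)] by (intro sum_nonpos) auto
    ultimately show False using lt \<open>(\<Sum>k<n. g i k) = 0\<close> by simp
  qed
  thus ?thesis .
qed

context
  fixes m n j :: nat and a b :: "nat \<Rightarrow> nat" and A B :: "nat \<Rightarrow> nat \<Rightarrow> nat"
  assumes vp: "validP m n j a b" and ft: "fits m n j a b A"
    and Bt: "B \<in> ternary_matrices m n"
    and rows: "\<forall>i<m. row_sum n B i = row_sum n A i"
    and cols: "\<forall>k<n. col_sum m B k = col_sum m A k"
begin

private definition "D i k = int (B i k) - int (A i k)"
private definition "u i = int (if a i = 0 then j + 1 else a i)"
private definition "v k = int (if b k = 0 then j + 1 else b k)"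
private definition "phi i k = int (j + 1) - u i - v k"

private lemma aPi4: "a \<in> {..<m} \<rightarrow>\<^sub>E {0..j}" and bPi4: "b \<in> {..<n} \<rightarrow>\<^sub>E {0..j}"
  using vp unfolding validP_def by blast+
private lemma ale4: "i < m \<Longrightarrow> a i \<le> j" using PiE_mem[OF aPi4, of i] by simp
private lemma ble4: "k < n \<Longrightarrow> b k \<le> j" using PiE_mem[OF bPi4, of k] by simp

private lemma rowD: "i < m \<Longrightarrow> (\<Sum>k<n. D i k) = 0"
proof -
  assume "i < m"
  hence "row_sum n B i = row_sum n A i" using rows by auto
  hence "int (\<Sum>k<n. B i k) = int (\<Sum>k<n. A i k)" unfolding row_sum_def by simp
  thus ?thesis unfolding D_def by (simp add: sum_subtractf)
qed

private lemma colD: "k < n \<Longrightarrow> (\<Sum>i<m. D i k) = 0"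
proof -
  assume "k < n"
  hence "col_sum m B k = col_sum m A k" using cols by auto
  hence "int (\<Sum>i<m. B i k) = int (\<Sum>i<m. A i k)" unfolding col_sum_def by simp
  thus ?thesis unfolding D_def by (simp add: sum_subtractf)
qed

private lemma Ale2: "A i k \<le> 2" using ft unfolding fits_def ternary_matrices_def by auto
private lemma Ble2: "B i k \<le> 2" using Bt unfolding ternary_matrices_def by auto

private lemma phi_cases:
  assumes "i < m" "k < n"
  shows "(phi i k > 0 \<longrightarrow> A i k = 2) \<and> (phi i k < 0 \<longrightarrow> A i k = 0) \<and> (phi i k = 0 \<longrightarrow> bdry j a b i k)"
proof -
  have h: "high j a b i k \<longrightarrow> A i k = 2"
    "\<not> high j a b i k \<and> \<not> bdry j a b i k \<longrightarrow> A i k = 0"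
    using ft assms unfolding fits_def by auto
  have al: "a i \<le> j" "b k \<le> j" using ale4 ble4 assms by auto
  show ?thesis
  proof (cases "a i = 0 \<or> b k = 0")
    case True
    hence "phi i k < 0" unfolding phi_def u_def v_def using al by auto
    moreover have "\<not> high j a b i k \<and> \<not> bdry j a b i k" using True unfolding high_def bdry_def by auto
    ultimately show ?thesis using h by auto
  next
    case False
    hence p: "phi i k = int (j + 1) - int (a i) - int (b k)" unfolding phi_def u_def v_def by auto
    show ?thesis using h False unfolding p high_def bdry_def by auto
  qed
qed

private lemma total_zero: "(\<Sum>i<m. \<Sum>k<n. D i k * phi i k) = 0"
proof -
  have "(\<Sum>i<m. \<Sum>k<n. D i k * phi i k) =
        (\<Sum>i<m. \<Sum>k<n. int (j+1) * D i k) - (\<Sum>i<m. \<Sum>k<n. u i * D i k) - (\<Sum>i<m. \<Sum>k<n. v k * D i k)"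
    unfolding phi_def by (simp add: algebra_simps sum_subtractf sum.distrib)
  also have "(\<Sum>i<m. \<Sum>k<n. int (j+1) * D i k) = 0"
    by (simp add: sum_distrib_left[symmetric] rowD)
  also have "(\<Sum>i<m. \<Sum>k<n. u i * D i k) = 0"
    by (simp add: sum_distrib_left[symmetric] rowD)
  also have "(\<Sum>i<m. \<Sum>k<n. v k * D i k) = (\<Sum>k<n. v k * (\<Sum>i<m. D i k))"
    by (subst sum.swap) (simp add: sum_distrib_left)
  also have "\<dots> = 0" by (simp add: colD)
  finally show ?thesis by simp
qed

private lemma term_nonpos: "i < m \<Longrightarrow> k < n \<Longrightarrow> D i k * phi i k \<le> 0"
proof -
  assume ik: "i < m" "k < n"
  note pc = phi_cases[OF ik]
  have "B i k \<le> 2" by (rule Ble2)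
  show ?thesis
  proof (cases "phi i k > 0")
    case True
    hence "D i k \<le> 0" using pc Ble2[of i k] unfolding D_def by auto
    thus ?thesis using True by (simp add: mult_nonpos_nonneg)
  next
    case False
    show ?thesis
    proof (cases "phi i k < 0")
      case True
      hence "D i k \<ge> 0" using pc unfolding D_def by auto
      thus ?thesis using True by (simp add: mult_nonneg_nonpos)
    next
      case False2: False
      thus ?thesis using False by simp
    qed
  qed
qed

private lemma off_bdry: "i < m \<Longrightarrow> k < n \<Longrightarrow> D i k \<noteq> 0 \<Longrightarrow> bdry j a b i k"
proof -
  assume ik: "i < m" "k < n" "D i k \<noteq> 0"
  have "D i k * phi i k = 0"
    using double_sum_nonpos_zero[of m n "\<lambda>i k. D i k * phi i k", OF term_nonpos total_zero ik(1,2)] by simp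
  hence "phi i k = 0" using ik(3) by simp
  thus ?thesis using phi_cases[OF ik(1,2)] by auto
qed

private lemma pos_one: "i < m \<Longrightarrow> k < n \<Longrightarrow> D i k > 0 \<Longrightarrow> A i k = 1 \<and> bdry j a b i k"
proof -
  assume ik: "i < m" "k < n" "D i k > 0"
  hence bd: "bdry j a b i k" using off_bdry by auto
  hence "1 \<le> A i k" using ft ik unfolding fits_def by auto
  moreover have "A i k < 2" using ik(3) Ble2[of i k] unfolding D_def by auto
  ultimately show ?thesis using bd by auto
qed

private lemma no_pos: "i < m \<Longrightarrow> k < n \<Longrightarrow> \<not> D i k > 0"
proof
  assume ik: "i < m" "k < n" "D i k > 0"
  note p1 = pos_one[OF ik]
  obtain i' where i': "i' < m" "D i' k < 0" using exists_neg[of "{..<m}" i "\<lambda>i. D i k"] ik colD[OF ik(2)] by auto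
  have bd': "bdry j a b i' k" using off_bdry[OF i'(1) ik(2)] i'(2) by auto
  obtain k'' where k'': "k'' < n" "D i' k'' > 0"
    using exists_pos[of "{..<n}" k "\<lambda>k. D i' k"] ik i' rowD[OF i'(1)] by auto
  note p2 = pos_one[OF i'(1) k'']
  have "a i = a i'" using p1 bd' unfolding bdry_def by auto
  moreover have "i \<noteq> i'" using ik(3) i'(2) by auto
  moreover have "k \<noteq> k''" using i'(2) k''(2) by auto
  moreover have "bdry j a b i k \<and> bdry j a b i' k'' \<and> a i = a i' \<and> A i k = 1 \<and> A i' k'' = 1 \<longrightarrow> i = i' \<or> k = k''"
    using ft ik(1,2) i'(1) k''(1) unfolding fits_def by blast
  ultimately show False using p1 p2 by auto
qed

private lemma D_zero: "i < m \<Longrightarrow> k < n \<Longrightarrow> D i k = 0"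
proof (rule ccontr)
  assume ik: "i < m" "k < n" "D i k \<noteq> 0"
  hence "D i k < 0" using no_pos[OF ik(1,2)] by simp
  then obtain k' where "k' < n" "D i k' > 0"
    using exists_pos[of "{..<n}" k "\<lambda>k. D i k"] ik rowD[OF ik(1)] by auto
  thus False using no_pos ik(1) by auto
qed

lemma B_eq: "B = A"
proof (intro ext)
  fix i k
  show "B i k = A i k"
  proof (cases "i < m \<and> k < n")
    case True thus ?thesis using D_zero[of i k] unfolding D_def by auto
  next
    case False
    thus ?thesis using Bt ft unfolding fits_def ternary_matrices_def by auto
  qed
qed

end

lemma fits_strong:
  assumes "validP m n j a b" "fits m n j a b A"
  shows "strong_lonesum m n A"
  unfolding strong_lonesum_def
proof (intro conjI ballI impI)
  show "A \<in> ternary_matrices m n" using assms unfolding fits_def by auto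
next
  fix B assume "B \<in> ternary_matrices m n" and
    "(\<forall>i<m. row_sum n B i = row_sum n A i) \<and> (\<forall>j<n. col_sum m B j = col_sum m A j)"
  thus "B = A" using B_eq[OF assms] by blast
qed


definition PP :: "(nat \<times> nat) set \<Rightarrow> bool" where
  "PP T \<longleftrightarrow> (\<forall>p\<in>T. \<forall>q\<in>T. fst p = fst q \<or> snd p = snd q)"

lemma card_small:
  assumes "finite X"
  shows "card {T. T \<subseteq> X \<and> card T \<le> 1} = 1 + card X"
proof -
  have e: "{T. T \<subseteq> X \<and> card T \<le> 1} = insert {} ((\<lambda>x. {x}) ` X)"
  proof (rule set_eqI)
    fix T
    show "T \<in> {T. T \<subseteq> X \<and> card T \<le> 1} \<longleftrightarrow> T \<in> insert {} ((\<lambda>x. {x}) ` X)"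
    proof
      assume T: "T \<in> {T. T \<subseteq> X \<and> card T \<le> 1}"
      hence fin: "finite T" using assms finite_subset by auto
      show "T \<in> insert {} ((\<lambda>x. {x}) ` X)"
      proof (cases "T = {}")
        case False
        hence "card T = 1" using T fin by (simp add: card_gt_0_iff le_antisym Suc_leI)
        then obtain x where "T = {x}" using card_1_singletonE by blast
        thus ?thesis using T by auto
      qed simp
    next
      assume "T \<in> insert {} ((\<lambda>x. {x}) ` X)"
      thus "T \<in> {T. T \<subseteq> X \<and> card T \<le> 1}" by auto
    qed
  qed
  have "card (insert {} ((\<lambda>x. {x}) ` X)) = 1 + card ((\<lambda>x. {x}) ` X)"
    using assms by (subst card_insert_disjoint) auto
  also have "card ((\<lambda>x. {x}) ` X) = card X" by (rule card_image) (auto simp: inj_on_def)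
  finally show ?thesis using e by simp
qed

lemma card_big:
  assumes "finite X"
  shows "int (card {T. T \<subseteq> X \<and> 2 \<le> card T}) = 2 ^ card X - int (card X) - 1"
proof -
  have "Pow X = {T. T \<subseteq> X \<and> card T \<le> 1} \<union> {T. T \<subseteq> X \<and> 2 \<le> card T}" by auto
  moreover have "{T. T \<subseteq> X \<and> card T \<le> 1} \<inter> {T. T \<subseteq> X \<and> 2 \<le> card T} = {}" by auto
  moreover have "finite (Pow X)" using assms by simp
  ultimately have "card (Pow X) = card {T. T \<subseteq> X \<and> card T \<le> 1} + card {T. T \<subseteq> X \<and> 2 \<le> card T}"
    by (metis (no_types, lifting) card_Un_disjoint finite_Un)
  hence "2 ^ card X = 1 + card X + card {T. T \<subseteq> X \<and> 2 \<le> card T}"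
    using card_small[OF assms] card_Pow[of X] assms by simp
  hence "int (2 ^ card X) = 1 + int (card X) + int (card {T. T \<subseteq> X \<and> 2 \<le> card T})"
    by (metis of_nat_add of_nat_1)
  thus ?thesis by simp
qed

lemma PP_big:
  assumes "T \<subseteq> R \<times> C" "2 \<le> card T" "PP T"
  shows "(\<exists>i\<in>R. T \<subseteq> {i} \<times> C) \<or> (\<exists>k\<in>C. T \<subseteq> R \<times> {k})"
proof -
  have finT: "finite T" using assms(2) card.infinite by fastforce
  have "\<not> card T \<le> Suc 0" using assms(2) by simp
  then obtain p q where pq: "p \<in> T" "q \<in> T" "p \<noteq> q" using card_le_Suc0_iff_eq[OF finT] by blast
  show ?thesis
  proof (cases "fst p = fst q")
    case True
    hence sn: "snd p \<noteq> snd q" using pq by (metis prod.expand)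
    have "\<forall>t\<in>T. fst t = fst p"
    proof
      fix t assume t: "t \<in> T"
      have "fst t = fst p \<or> snd t = snd p" "fst t = fst q \<or> snd t = snd q"
        using assms(3) t pq unfolding PP_def by blast+
      thus "fst t = fst p" using True sn by auto
    qed
    hence "T \<subseteq> {fst p} \<times> C" using assms(1) by fastforce
    moreover have "fst p \<in> R" using assms(1) pq by auto
    ultimately show ?thesis by blast
  next
    case False
    hence sn: "snd p = snd q" using assms(3) pq unfolding PP_def by blast
    have "\<forall>t\<in>T. snd t = snd p"
    proof
      fix t assume t: "t \<in> T"
      have "fst t = fst p \<or> snd t = snd p" "fst t = fst q \<or> snd t = snd q"
        using assms(3) t pq unfolding PP_def by blast+
      thus "snd t = snd p" using False sn by auto
    qed
    hence "T \<subseteq> R \<times> {snd p}" using assms(1) by fastforce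
    moreover have "snd p \<in> C" using assms(1) pq by auto
    ultimately show ?thesis by blast
  qed
qed

lemma card_rows:
  assumes "finite R" "finite C"
  shows "int (card (\<Union>i\<in>R. {T. T \<subseteq> {i} \<times> C \<and> 2 \<le> card T})) = int (card R) * (2 ^ card C - int (card C) - 1)"
proof -
  have "card (\<Union>i\<in>R. {T. T \<subseteq> {i} \<times> C \<and> 2 \<le> card T}) = (\<Sum>i\<in>R. card {T. T \<subseteq> {i} \<times> C \<and> 2 \<le> card T})"
  proof (rule card_UN_disjoint)
    show "finite R" by fact
    show "\<forall>i\<in>R. finite {T. T \<subseteq> {i} \<times> C \<and> 2 \<le> card T}"
      using assms by (auto intro: finite_subset[of _ "Pow ({_} \<times> C)"])
    show "\<forall>i\<in>R. \<forall>i'\<in>R. i \<noteq> i' \<longrightarrow> {T. T \<subseteq> {i} \<times> C \<and> 2 \<le> card T} \<inter> {T. T \<subseteq> {i'} \<times> C \<and> 2 \<le> card T} = {}"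
    proof (intro ballI impI)
      fix i i' assume "i \<noteq> i'"
      {
        fix T assume T: "T \<subseteq> {i} \<times> C" "T \<subseteq> {i'} \<times> C" "2 \<le> card T"
        hence "T = {}" using \<open>i \<noteq> i'\<close> by auto
        hence False using T by simp
      }
      thus "{T. T \<subseteq> {i} \<times> C \<and> 2 \<le> card T} \<inter> {T. T \<subseteq> {i'} \<times> C \<and> 2 \<le> card T} = {}" by blast
    qed
  qed
  hence 1: "int (card (\<Union>i\<in>R. {T. T \<subseteq> {i} \<times> C \<and> 2 \<le> card T})) = (\<Sum>i\<in>R. int (card {T. T \<subseteq> {i} \<times> C \<and> 2 \<le> card T}))"
    by (simp add: of_nat_sum)
  have "\<And>i. int (card {T. T \<subseteq> {i} \<times> C \<and> 2 \<le> card T}) = 2 ^ card C - int (card C) - 1"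
  proof -
    fix i
    have "card ({i} \<times> C) = card C" by (simp add: card_cartesian_product)
    thus "int (card {T. T \<subseteq> {i} \<times> C \<and> 2 \<le> card T}) = 2 ^ card C - int (card C) - 1"
      using card_big[of "{i} \<times> C"] assms by simp
  qed
  hence "(\<Sum>i\<in>R. int (card {T. T \<subseteq> {i} \<times> C \<and> 2 \<le> card T})) = (\<Sum>i\<in>R. 2 ^ card C - int (card C) - 1)"
    by (intro sum.cong) auto
  thus ?thesis using 1 by simp
qed

lemma card_cols:
  assumes "finite R" "finite C"
  shows "int (card (\<Union>k\<in>C. {T. T \<subseteq> R \<times> {k} \<and> 2 \<le> card T})) = int (card C) * (2 ^ card R - int (card R) - 1)"
proof -
  have "card (\<Union>k\<in>C. {T. T \<subseteq> R \<times> {k} \<and> 2 \<le> card T}) = (\<Sum>k\<in>C. card {T. T \<subseteq> R \<times> {k} \<and> 2 \<le> card T})"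
  proof (rule card_UN_disjoint)
    show "finite C" by fact
    show "\<forall>k\<in>C. finite {T. T \<subseteq> R \<times> {k} \<and> 2 \<le> card T}"
      using assms by (auto intro: finite_subset[of _ "Pow (R \<times> {_})"])
    show "\<forall>k\<in>C. \<forall>k'\<in>C. k \<noteq> k' \<longrightarrow> {T. T \<subseteq> R \<times> {k} \<and> 2 \<le> card T} \<inter> {T. T \<subseteq> R \<times> {k'} \<and> 2 \<le> card T} = {}"
    proof (intro ballI impI)
      fix k k' assume "k \<noteq> k'"
      {
        fix T assume T: "T \<subseteq> R \<times> {k}" "T \<subseteq> R \<times> {k'}" "2 \<le> card T"
        hence "T = {}" using \<open>k \<noteq> k'\<close> by auto
        hence False using T by simp
      }
      thus "{T. T \<subseteq> R \<times> {k} \<and> 2 \<le> card T} \<inter> {T. T \<subseteq> R \<times> {k'} \<and> 2 \<le> card T} = {}" by blast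
    qed
  qed
  hence 1: "int (card (\<Union>k\<in>C. {T. T \<subseteq> R \<times> {k} \<and> 2 \<le> card T})) = (\<Sum>k\<in>C. int (card {T. T \<subseteq> R \<times> {k} \<and> 2 \<le> card T}))"
    by (simp add: of_nat_sum)
  have "\<And>k. int (card {T. T \<subseteq> R \<times> {k} \<and> 2 \<le> card T}) = 2 ^ card R - int (card R) - 1"
  proof -
    fix k
    have "card (R \<times> {k}) = card R" by (simp add: card_cartesian_product)
    thus "int (card {T. T \<subseteq> R \<times> {k} \<and> 2 \<le> card T}) = 2 ^ card R - int (card R) - 1"
      using card_big[of "R \<times> {k}"] assms by simp
  qed
  hence "(\<Sum>k\<in>C. int (card {T. T \<subseteq> R \<times> {k} \<and> 2 \<le> card T})) = (\<Sum>k\<in>C. 2 ^ card R - int (card R) - 1)"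
    by (intro sum.cong) auto
  thus ?thesis using 1 by simp
qed

lemma f3_count:
  assumes "finite R" "finite C"
  shows "int (card {T. T \<subseteq> R \<times> C \<and> PP T}) = f3 (card R) (card C)"
proof -
  define S1 where "S1 = {T. T \<subseteq> R \<times> C \<and> card T \<le> 1}"
  define S2 where "S2 = (\<Union>i\<in>R. {T. T \<subseteq> {i} \<times> C \<and> 2 \<le> card T})"
  define S3 where "S3 = (\<Union>k\<in>C. {T. T \<subseteq> R \<times> {k} \<and> 2 \<le> card T})"
  have fin: "finite (R \<times> C)" using assms by simp
  have e: "{T. T \<subseteq> R \<times> C \<and> PP T} = S1 \<union> S2 \<union> S3"
  proof (rule set_eqI)
    fix T
    show "T \<in> {T. T \<subseteq> R \<times> C \<and> PP T} \<longleftrightarrow> T \<in> S1 \<union> S2 \<union> S3"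
    proof
      assume T: "T \<in> {T. T \<subseteq> R \<times> C \<and> PP T}"
      show "T \<in> S1 \<union> S2 \<union> S3"
      proof (cases "card T \<le> 1")
        case True
        hence "T \<in> S1" using T unfolding S1_def by blast
        thus ?thesis by blast
      next
        case False
        hence c2: "2 \<le> card T" by simp
        have TT: "T \<subseteq> R \<times> C" "PP T" using T by auto
        from PP_big[OF TT(1) c2 TT(2)] show ?thesis
        proof
          assume "\<exists>i\<in>R. T \<subseteq> {i} \<times> C"
          then obtain i where "i \<in> R" "T \<subseteq> {i} \<times> C" by blast
          hence "T \<in> S2" unfolding S2_def using c2 by blast
          thus ?thesis by blast
        next
          assume "\<exists>k\<in>C. T \<subseteq> R \<times> {k}"
          then obtain k where "k \<in> C" "T \<subseteq> R \<times> {k}" by blast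
          hence "T \<in> S3" unfolding S3_def using c2 by blast
          thus ?thesis by blast
        qed
      qed
    next
      assume "T \<in> S1 \<union> S2 \<union> S3"
      thus "T \<in> {T. T \<subseteq> R \<times> C \<and> PP T}"
      proof (elim UnE)
        assume "T \<in> S1"
        hence T: "T \<subseteq> R \<times> C" "card T \<le> 1" unfolding S1_def by blast+
        have fT: "finite T" using finite_subset[OF T(1) fin] .
        have "card T \<le> Suc 0" using T(2) by simp
        hence "\<forall>p\<in>T. \<forall>q\<in>T. p = q" using fT by (simp add: card_le_Suc0_iff_eq)
        hence "PP T" unfolding PP_def by metis
        thus ?thesis using T(1) by blast
      next
        assume "T \<in> S2"
        then obtain i where i: "i \<in> R" "T \<subseteq> {i} \<times> C" unfolding S2_def by blast
        hence "T \<subseteq> R \<times> C" by blast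
        moreover have "\<forall>p\<in>T. fst p = i" using i(2) by auto
        hence "PP T" unfolding PP_def by simp
        ultimately show ?thesis by blast
      next
        assume "T \<in> S3"
        then obtain k where k: "k \<in> C" "T \<subseteq> R \<times> {k}" unfolding S3_def by blast
        hence "T \<subseteq> R \<times> C" by blast
        moreover have "\<forall>p\<in>T. snd p = k" using k(2) by auto
        hence "PP T" unfolding PP_def by simp
        ultimately show ?thesis by blast
      qed
    qed
  qed
  have "S1 \<subseteq> Pow (R \<times> C)" "S2 \<subseteq> Pow (R \<times> C)" "S3 \<subseteq> Pow (R \<times> C)"
    unfolding S1_def S2_def S3_def by blast+
  hence fS: "finite S1" "finite S2" "finite S3"
    using fin by (meson finite_Pow_iff finite_subset)+
  have d12: "S1 \<inter> S2 = {}" unfolding S1_def S2_def by auto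
  have d13: "S1 \<inter> S3 = {}" unfolding S1_def S3_def by auto
  have d23: "S2 \<inter> S3 = {}"
  proof -
    {
      fix T i k assume T: "T \<subseteq> {i} \<times> C" "T \<subseteq> R \<times> {k}" "2 \<le> card T"
      hence "T \<subseteq> {(i, k)}" by auto
      hence "card T \<le> 1" using card_mono[of "{(i,k)}" T] by simp
      hence False using T by simp
    }
    thus ?thesis unfolding S2_def S3_def by blast
  qed
  have "card (S1 \<union> S2) = card S1 + card S2" by (rule card_Un_disjoint[OF fS(1,2) d12])
  moreover have "card (S1 \<union> S2 \<union> S3) = card (S1 \<union> S2) + card S3"
    by (rule card_Un_disjoint) (use fS d13 d23 in auto)
  ultimately have "card (S1 \<union> S2 \<union> S3) = card S1 + card S2 + card S3" by simp
  hence "int (card {T. T \<subseteq> R \<times> C \<and> PP T}) = int (card S1) + int (card S2) + int (card S3)"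
    using e by simp
  also have "int (card S1) = 1 + int (card R) * int (card C)"
    unfolding S1_def using card_small[OF fin] by (simp add: card_cartesian_product)
  also have "int (card S2) = int (card R) * (2 ^ card C - int (card C) - 1)"
    unfolding S2_def by (rule card_rows[OF assms])
  also have "int (card S3) = int (card C) * (2 ^ card R - int (card R) - 1)"
    unfolding S3_def by (rule card_cols[OF assms])
  finally show ?thesis unfolding f3_def by simp
qed


context
  fixes m n j :: nat and a b :: "nat \<Rightarrow> nat"
  assumes vp: "validP m n j a b"
begin

definition EE :: "(nat \<times> nat) set" where "EE = {p. fst p < m \<and> snd p < n \<and> bdry j a b (fst p) (snd p)}"
definition okT :: "(nat \<times> nat) set \<Rightarrow> bool" where "okT T \<longleftrightarrow> T \<subseteq> EE \<and> (\<forall>p\<in>T. \<forall>q\<in>T. a (fst p) = a (fst q) \<longrightarrow> fst p = fst q \<or> snd p = snd q)"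
definition mk :: "(nat \<times> nat) set \<Rightarrow> nat \<Rightarrow> nat \<Rightarrow> nat" where "mk T = (\<lambda>i k. if i < m \<and> k < n then (if high j a b i k then 2 else if bdry j a b i k then
    (if (i, k) \<in> T then 1 else 2) else 0) else 0)"
definition Blk :: "nat \<Rightarrow> (nat \<times> nat) set" where "Blk l = {i. i < m \<and> a i = l} \<times> {k. k < n \<and> b k = j + 1 - l}"

lemma hb: "high j a b i k \<Longrightarrow> \<not> bdry j a b i k"
  unfolding high_def bdry_def by auto

lemma mk_fits: "okT T \<Longrightarrow> fits m n j a b (mk T)"
  unfolding fits_def
proof (intro conjI allI impI)
  assume T: "okT T"
  show "mk T \<in> ternary_matrices m n" unfolding ternary_matrices_def mk_def by auto
next
  fix i k assume "i < m" "k < n" "high j a b i k"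
  thus "mk T i k = 2" unfolding mk_def by simp
next
  fix i k assume "i < m" "k < n" "bdry j a b i k"
  thus "1 \<le> mk T i k" using hb unfolding mk_def by auto
next
  fix i k assume "i < m" "k < n" "\<not> high j a b i k \<and> \<not> bdry j a b i k"
  thus "mk T i k = 0" unfolding mk_def by simp
next
  fix i i' k k' assume T: "okT T" and r: "i < m" "i' < m" "k < n" "k' < n"
    and c: "bdry j a b i k \<and> bdry j a b i' k' \<and> a i = a i' \<and> mk T i k = 1 \<and> mk T i' k' = 1"
  have "(i, k) \<in> T" using c r hb[of i k] unfolding mk_def by (auto split: if_splits)
  moreover have "(i', k') \<in> T" using c r hb[of i' k'] unfolding mk_def by (auto split: if_splits)
  ultimately show "i = i' \<or> k = k'" using T c unfolding okT_def by fastforce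
qed

definition oneset :: "(nat \<Rightarrow> nat \<Rightarrow> nat) \<Rightarrow> (nat \<times> nat) set" where "oneset A = {p. fst p < m \<and> snd p < n \<and> bdry j a b (fst p) (snd p) \<and> A (fst p) (snd p) = 1}"

lemma fits_mk:
  assumes "fits m n j a b A"
  shows "okT (oneset A) \<and> A = mk (oneset A)"
proof
  have bc: "\<And>i i' k k'. i < m \<Longrightarrow> i' < m \<Longrightarrow> k < n \<Longrightarrow> k' < n \<Longrightarrow> bdry j a b i k \<Longrightarrow> bdry j a b i' k' \<Longrightarrow>
     a i = a i' \<Longrightarrow> A i k = 1 \<Longrightarrow> A i' k' = 1 \<Longrightarrow> i = i' \<or> k = k'"
    using assms unfolding fits_def by blast
  show "okT (oneset A)" unfolding okT_def
  proof (intro conjI ballI impI)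
    show "oneset A \<subseteq> EE" unfolding oneset_def EE_def by auto
  next
    fix p q assume "p \<in> oneset A" "q \<in> oneset A" "a (fst p) = a (fst q)"
    thus "fst p = fst q \<or> snd p = snd q" unfolding oneset_def using bc by blast
  qed
  show "A = mk (oneset A)"
  proof (intro ext)
    fix i k
    show "A i k = mk (oneset A) i k"
    proof (cases "i < m \<and> k < n")
      case True
      have h: "high j a b i k \<longrightarrow> A i k = 2" "bdry j a b i k \<longrightarrow> 1 \<le> A i k"
        "\<not> high j a b i k \<and> \<not> bdry j a b i k \<longrightarrow> A i k = 0" "A i k \<le> 2"
        using assms True unfolding fits_def ternary_matrices_def by auto
      show ?thesis
      proof (cases "high j a b i k")
        case True2: True thus ?thesis using h True unfolding mk_def by simp
      next
        case False
        show ?thesis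
        proof (cases "bdry j a b i k")
          case True3: True
          hence "A i k = 1 \<or> A i k = 2" using h by auto
          thus ?thesis using True True3 False unfolding mk_def oneset_def by auto
        next
          case False3: False
          thus ?thesis using h True False unfolding mk_def by simp
        qed
      qed
    next
      case False
      thus ?thesis using assms unfolding fits_def ternary_matrices_def mk_def by auto
    qed
  qed
qed

lemma mk_inj: "inj_on mk {T. okT T}"
proof (rule inj_onI)
  fix T T' assume T: "T \<in> {T. okT T}" "T' \<in> {T. okT T}" and e: "mk T = mk T'"
  have "p \<in> T \<longleftrightarrow> p \<in> T'" for p :: "nat \<times> nat"
  proof (cases "p \<in> EE")
    case True
    obtain i k where p: "p = (i, k)" by fastforce
    have c: "i < m" "k < n" "bdry j a b i k" using True p unfolding EE_def by auto
    have "mk T i k = mk T' i k" using e by (rule arg_cong)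
    thus ?thesis using c hb[of i k] p unfolding mk_def by (auto split: if_splits)
  next
    case False thus ?thesis using T unfolding okT_def by auto
  qed
  thus "T = T'" by blast
qed

lemma fits_img: "{A. fits m n j a b A} = mk ` {T. okT T}"
proof
  show "{A. fits m n j a b A} \<subseteq> mk ` {T. okT T}"
  proof
    fix A assume "A \<in> {A. fits m n j a b A}"
    hence "okT (oneset A)" "A = mk (oneset A)" using fits_mk by auto
    thus "A \<in> mk ` {T. okT T}" by blast
  qed
  show "mk ` {T. okT T} \<subseteq> {A. fits m n j a b A}" using mk_fits by auto
qed

lemma card_fits_okT: "card {A. fits m n j a b A} = card {T. okT T}"
  unfolding fits_img by (rule card_image[OF mk_inj])

lemma aPi6: "a \<in> {..<m} \<rightarrow>\<^sub>E {0..j}" and bPi6: "b \<in> {..<n} \<rightarrow>\<^sub>E {0..j}"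
  using vp unfolding validP_def by blast+
lemma ale6: "i < m \<Longrightarrow> a i \<le> j" using PiE_mem[OF aPi6, of i] by simp
lemma ble6: "k < n \<Longrightarrow> b k \<le> j" using PiE_mem[OF bPi6, of k] by simp

lemma EE_Blk: "EE = (\<Union>l\<in>{1..j}. Blk l)"
proof (rule set_eqI)
  fix p :: "nat \<times> nat"
  obtain i k where p: "p = (i, k)" by fastforce
  show "p \<in> EE \<longleftrightarrow> p \<in> (\<Union>l\<in>{1..j}. Blk l)"
  proof
    assume "p \<in> EE"
    hence c: "i < m" "k < n" "1 \<le> a i" "1 \<le> b k" "a i + b k = j + 1" using p unfolding EE_def bdry_def by auto
    hence "a i \<in> {1..j}" by auto
    moreover have "p \<in> Blk (a i)" using c p unfolding Blk_def by auto
    ultimately show "p \<in> (\<Union>l\<in>{1..j}. Blk l)" by blast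
  next
    assume "p \<in> (\<Union>l\<in>{1..j}. Blk l)"
    then obtain l where l: "l \<in> {1..j}" "p \<in> Blk l" by blast
    hence "i < m" "k < n" "a i = l" "b k = j + 1 - l" using p unfolding Blk_def by auto
    thus "p \<in> EE" using l p unfolding EE_def bdry_def by auto
  qed
qed

lemma Blk_a: "p \<in> Blk l \<Longrightarrow> a (fst p) = l"
  unfolding Blk_def by auto

lemma okT_PiE: "bij_betw (\<lambda>T. restrict (\<lambda>l. T \<inter> Blk l) {1..j}) {T. okT T}
    (PiE {1..j} (\<lambda>l. {T. T \<subseteq> Blk l \<and> PP T}))"
proof (rule bij_betw_byWitness[where f' = "\<lambda>F. \<Union>l\<in>{1..j}. F l"])
  show "\<forall>T\<in>{T. okT T}. (\<Union>l\<in>{1..j}. restrict (\<lambda>l. T \<inter> Blk l) {1..j} l) = T"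
  proof
    fix T assume "T \<in> {T. okT T}"
    hence "T \<subseteq> EE" unfolding okT_def by auto
    hence "T = (\<Union>l\<in>{1..j}. T \<inter> Blk l)" unfolding EE_Blk by blast
    thus "(\<Union>l\<in>{1..j}. restrict (\<lambda>l. T \<inter> Blk l) {1..j} l) = T" by simp
  qed
next
  show "\<forall>F\<in>PiE {1..j} (\<lambda>l. {T. T \<subseteq> Blk l \<and> PP T}). restrict (\<lambda>l. (\<Union>l'\<in>{1..j}. F l') \<inter> Blk l) {1..j} = F"
  proof
    fix F assume F: "F \<in> PiE {1..j} (\<lambda>l. {T. T \<subseteq> Blk l \<and> PP T})"
    have sub: "\<And>l. l \<in> {1..j} \<Longrightarrow> F l \<subseteq> Blk l" using F by (simp add: PiE_iff)
    show "restrict (\<lambda>l. (\<Union>l'\<in>{1..j}. F l') \<inter> Blk l) {1..j} = F"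
    proof (rule extensionalityI[where A="{1..j}"])
      show "restrict (\<lambda>l. (\<Union>l'\<in>{1..j}. F l') \<inter> Blk l) {1..j} \<in> extensional {1..j}" by simp
      show "F \<in> extensional {1..j}" using F by (simp add: PiE_iff)
    next
      fix l assume l: "l \<in> {1..j}"
      have "(\<Union>l'\<in>{1..j}. F l') \<inter> Blk l = F l"
      proof
        show "(\<Union>l'\<in>{1..j}. F l') \<inter> Blk l \<subseteq> F l"
        proof
          fix p assume "p \<in> (\<Union>l'\<in>{1..j}. F l') \<inter> Blk l"
          then obtain l' where l': "l' \<in> {1..j}" "p \<in> F l'" "p \<in> Blk l" by blast
          have "a (fst p) = l'" using sub[OF l'(1)] l'(2) Blk_a by blast
          moreover have "a (fst p) = l" using l'(3) Blk_a by blast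
          ultimately show "p \<in> F l" using l' by simp
        qed
        show "F l \<subseteq> (\<Union>l'\<in>{1..j}. F l') \<inter> Blk l" using sub[OF l] l by blast
      qed
      thus "restrict (\<lambda>l. (\<Union>l'\<in>{1..j}. F l') \<inter> Blk l) {1..j} l = F l" using l by simp
    qed
  qed
next
  show "(\<lambda>T. restrict (\<lambda>l. T \<inter> Blk l) {1..j}) ` {T. okT T} \<subseteq> PiE {1..j} (\<lambda>l. {T. T \<subseteq> Blk l \<and> PP T})"
  proof
    fix F assume "F \<in> (\<lambda>T. restrict (\<lambda>l. T \<inter> Blk l) {1..j}) ` {T. okT T}"
    then obtain T where T: "okT T" "F = restrict (\<lambda>l. T \<inter> Blk l) {1..j}" by blast
    have "\<And>l. PP (T \<inter> Blk l)"
    proof -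
      fix l
      show "PP (T \<inter> Blk l)" unfolding PP_def
      proof (intro ballI)
        fix p q assume "p \<in> T \<inter> Blk l" "q \<in> T \<inter> Blk l"
        moreover hence "a (fst p) = a (fst q)" using Blk_a[of p l] Blk_a[of q l] by simp
        ultimately show "fst p = fst q \<or> snd p = snd q" using T(1) unfolding okT_def by blast
      qed
    qed
    thus "F \<in> PiE {1..j} (\<lambda>l. {T. T \<subseteq> Blk l \<and> PP T})" using T(2) by auto
  qed
next
  show "(\<lambda>F. \<Union>l\<in>{1..j}. F l) ` PiE {1..j} (\<lambda>l. {T. T \<subseteq> Blk l \<and> PP T}) \<subseteq> {T. okT T}"
  proof
    fix T assume "T \<in> (\<lambda>F. \<Union>l\<in>{1..j}. F l) ` PiE {1..j} (\<lambda>l. {T. T \<subseteq> Blk l \<and> PP T})"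
    then obtain F where F: "F \<in> PiE {1..j} (\<lambda>l. {T. T \<subseteq> Blk l \<and> PP T})" "T = (\<Union>l\<in>{1..j}. F l)" by blast
    have sub: "\<And>l. l \<in> {1..j} \<Longrightarrow> F l \<subseteq> Blk l" and pp: "\<And>l. l \<in> {1..j} \<Longrightarrow> PP (F l)"
      using F(1) by (simp_all add: PiE_iff)
    have "T \<subseteq> EE" unfolding EE_Blk F(2) using sub by blast
    moreover have "\<forall>p\<in>T. \<forall>q\<in>T. a (fst p) = a (fst q) \<longrightarrow> fst p = fst q \<or> snd p = snd q"
    proof (intro ballI impI)
      fix p q assume pq: "p \<in> T" "q \<in> T" "a (fst p) = a (fst q)"
      obtain l where l: "l \<in> {1..j}" "p \<in> F l" using pq F(2) by blast
      obtain l' where l': "l' \<in> {1..j}" "q \<in> F l'" using pq F(2) by blast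
      have "a (fst p) = l" using sub[OF l(1)] l(2) Blk_a by blast
      moreover have "a (fst q) = l'" using sub[OF l'(1)] l'(2) Blk_a by blast
      ultimately have "l = l'" using pq by simp
      thus "fst p = fst q \<or> snd p = snd q" using pp[OF l(1)] l l' unfolding PP_def by blast
    qed
    ultimately show "T \<in> {T. okT T}" unfolding okT_def by blast
  qed
qed

lemma card_fits:
  "int (card {A. fits m n j a b A}) =
     (\<Prod>l\<in>{1..j}. f3 (card {i. i < m \<and> a i = l}) (card {k. k < n \<and> b k = j + 1 - l}))"
proof -
  have "card {A. fits m n j a b A} = card (PiE {1..j} (\<lambda>l. {T. T \<subseteq> Blk l \<and> PP T}))"
    unfolding card_fits_okT by (rule bij_betw_same_card[OF okT_PiE])
  also have "\<dots> = (\<Prod>l\<in>{1..j}. card {T. T \<subseteq> Blk l \<and> PP T})" by (rule card_PiE) simp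
  finally have "int (card {A. fits m n j a b A}) = (\<Prod>l\<in>{1..j}. int (card {T. T \<subseteq> Blk l \<and> PP T}))"
    by (simp add: of_nat_prod)
  also have "\<dots> = (\<Prod>l\<in>{1..j}. f3 (card {i. i < m \<and> a i = l}) (card {k. k < n \<and> b k = j + 1 - l}))"
  proof (rule prod.cong)
    fix l
    show "int (card {T. T \<subseteq> Blk l \<and> PP T}) = f3 (card {i. i < m \<and> a i = l}) (card {k. k < n \<and> b k = j + 1 - l})"
      unfolding Blk_def by (rule f3_count) auto
  qed simp
  finally show ?thesis .
qed

lemma finite_fits: "finite {A. fits m n j a b A}"
proof -
  have "finite (PiE {1..j} (\<lambda>l. {T. T \<subseteq> Blk l \<and> PP T}))"
  proof (rule finite_PiE)
    show "finite {1..j}" by simp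
    fix l
    have "finite (Blk l)" unfolding Blk_def by auto
    moreover have "{T. T \<subseteq> Blk l \<and> PP T} \<subseteq> Pow (Blk l)" by blast
    ultimately show "finite {T. T \<subseteq> Blk l \<and> PP T}" by (meson finite_Pow_iff finite_subset)
  qed
  hence "finite {T. okT T}" using bij_betw_finite[OF okT_PiE] by simp
  thus ?thesis unfolding fits_img by simp
qed

end


definition Gset :: "nat set \<Rightarrow> nat list \<Rightarrow> (nat \<Rightarrow> nat) set" where
  "Gset D xs = {f \<in> D \<rightarrow>\<^sub>E {..<length xs}. \<forall>l<length xs. card {i \<in> D. f i = l} = xs ! l}"

lemma finite_Gset: "finite D \<Longrightarrow> finite (Gset D xs)"
  unfolding Gset_def by (rule finite_subset[of _ "D \<rightarrow>\<^sub>E {..<length xs}"]) (auto intro: finite_PiE)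

lemma Gset_count:
  "finite D \<Longrightarrow> sum_list xs = card D \<Longrightarrow> card (Gset D xs) * (\<Prod>x\<leftarrow>xs. fact x) = fact (card D)"
proof (induction xs arbitrary: D rule: rev_induct)
  case Nil
  hence D: "D = {}" by simp
  have "Gset D [] = {\<lambda>_. undefined}" unfolding Gset_def D by auto
  thus ?case using D by simp
next
  case (snoc x xs)
  define L where "L = length xs"
  define U where "U = {U. U \<subseteq> D \<and> card U = x}"
  define Uf where "Uf f = {i \<in> D. f i = L}" for f :: "nat \<Rightarrow> nat"
  define G where "G = Gset D (xs @ [x])"
  have xle: "x \<le> card D" using snoc.prems by simp
  have G_alt: "f \<in> G \<longleftrightarrow> f \<in> D \<rightarrow>\<^sub>E {..<Suc L} \<and> (\<forall>l<L. card {i \<in> D. f i = l} = xs ! l) \<and> card (Uf f) = x" for f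
    unfolding G_def Gset_def Uf_def L_def by (auto simp: nth_append less_Suc_eq)
  have part: "G = (\<Union>V\<in>U. {f \<in> G. Uf f = V})"
  proof
    show "G \<subseteq> (\<Union>V\<in>U. {f \<in> G. Uf f = V})"
    proof
      fix f assume f: "f \<in> G"
      hence "Uf f \<in> U" unfolding U_def using G_alt[of f] unfolding Uf_def by auto
      thus "f \<in> (\<Union>V\<in>U. {f \<in> G. Uf f = V})" using f by blast
    qed
  qed blast
  have bij: "bij_betw (\<lambda>f. restrict f (D - V)) {f \<in> G. Uf f = V} (Gset (D - V) xs)" if V: "V \<in> U" for V
  proof (rule bij_betw_byWitness[where f' = "\<lambda>g i. if i \<in> V then L else g i"])
    have VD: "V \<subseteq> D" using V unfolding U_def by auto
    show "\<forall>f\<in>{f \<in> G. Uf f = V}. (\<lambda>i. if i \<in> V then L else restrict f (D - V) i) = f"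
    proof
      fix f assume f: "f \<in> {f \<in> G. Uf f = V}"
      hence fP: "f \<in> D \<rightarrow>\<^sub>E {..<Suc L}" and fV: "{i \<in> D. f i = L} = V" using G_alt[of f] unfolding Uf_def by auto
      show "(\<lambda>i. if i \<in> V then L else restrict f (D - V) i) = f"
      proof
        fix i
        show "(if i \<in> V then L else restrict f (D - V) i) = f i"
        proof (cases "i \<in> D")
          case True thus ?thesis using fV by auto
        next
          case False
          hence "f i = undefined" using fP by (simp add: PiE_def extensional_def)
          thus ?thesis using False VD by auto
        qed
      qed
    qed
  next
    have VD: "V \<subseteq> D" using V unfolding U_def by auto
    show "\<forall>g\<in>Gset (D - V) xs. restrict (\<lambda>i. if i \<in> V then L else g i) (D - V) = g"
    proof
      fix g assume g: "g \<in> Gset (D - V) xs"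
      hence "g \<in> extensional (D - V)" unfolding Gset_def by (simp add: PiE_iff)
      thus "restrict (\<lambda>i. if i \<in> V then L else g i) (D - V) = g"
        by (intro extensionalityI[where A = "D - V"]) auto
    qed
  next
    show "(\<lambda>f. restrict f (D - V)) ` {f \<in> G. Uf f = V} \<subseteq> Gset (D - V) xs"
    proof
      fix g assume "g \<in> (\<lambda>f. restrict f (D - V)) ` {f \<in> G. Uf f = V}"
      then obtain f where f: "f \<in> G" "Uf f = V" "g = restrict f (D - V)" by blast
      have fP: "f \<in> D \<rightarrow>\<^sub>E {..<Suc L}" and fib: "\<forall>l<L. card {i \<in> D. f i = l} = xs ! l"
        and fV: "{i \<in> D. f i = L} = V" using G_alt[of f] f unfolding Uf_def by auto
      have "g \<in> (D - V) \<rightarrow>\<^sub>E {..<L}"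
      proof -
        have "\<forall>i\<in>D - V. f i < L"
        proof
          fix i assume i: "i \<in> D - V"
          hence "f i < Suc L" using fP by auto
          moreover have "f i \<noteq> L" using i fV by auto
          ultimately show "f i < L" by simp
        qed
        thus ?thesis using f(3) by auto
      qed
      moreover have "\<forall>l<L. card {i \<in> D - V. g i = l} = xs ! l"
      proof (intro allI impI)
        fix l assume l: "l < L"
        have "{i \<in> D - V. g i = l} = {i \<in> D. f i = l}" using f(3) fV l by auto
        thus "card {i \<in> D - V. g i = l} = xs ! l" using fib l by simp
      qed
      ultimately show "g \<in> Gset (D - V) xs" unfolding Gset_def L_def by auto
    qed
  next
    have VD: "V \<subseteq> D" and cV: "card V = x" using V unfolding U_def by auto
    show "(\<lambda>g i. if i \<in> V then L else g i) ` Gset (D - V) xs \<subseteq> {f \<in> G. Uf f = V}"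
    proof
      fix h assume "h \<in> (\<lambda>g i. if i \<in> V then L else g i) ` Gset (D - V) xs"
      then obtain g where g: "g \<in> Gset (D - V) xs" "h = (\<lambda>i. if i \<in> V then L else g i)" by blast
      have gP: "g \<in> (D - V) \<rightarrow>\<^sub>E {..<L}" and gfib: "\<forall>l<L. card {i \<in> D - V. g i = l} = xs ! l"
        using g(1) unfolding Gset_def L_def by auto
      have hP: "h \<in> D \<rightarrow>\<^sub>E {..<Suc L}"
      proof -
        have "\<forall>i\<in>D. h i < Suc L"
        proof
          fix i assume "i \<in> D"
          show "h i < Suc L"
          proof (cases "i \<in> V")
            case False
            hence "i \<in> D - V" using \<open>i \<in> D\<close> by simp
            hence "g i < L" using PiE_mem[OF gP] by auto
            thus ?thesis using False g(2) by simp
          qed (simp add: g(2))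
        qed
        moreover have "\<forall>i. i \<notin> D \<longrightarrow> h i = undefined"
          using gP g(2) VD by (auto simp: PiE_def extensional_def)
        ultimately show ?thesis by (auto simp: PiE_def extensional_def)
      qed
      have hV: "{i \<in> D. h i = L} = V"
      proof -
        have "\<forall>i\<in>D - V. g i < L" using gP by auto
        thus ?thesis using g(2) VD by auto
      qed
      have "\<forall>l<L. card {i \<in> D. h i = l} = xs ! l"
      proof (intro allI impI)
        fix l assume l: "l < L"
        have "{i \<in> D. h i = l} = {i \<in> D - V. g i = l}" using g(2) l by auto
        thus "card {i \<in> D. h i = l} = xs ! l" using gfib l by simp
      qed
      moreover have "card (Uf h) = x" using hV cV unfolding Uf_def by simp
      ultimately have "h \<in> G" using hP G_alt by auto
      thus "h \<in> {f \<in> G. Uf f = V}" using hV unfolding Uf_def by auto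
    qed
  qed
  have finD: "finite D" by fact
  have finU: "finite U" unfolding U_def using finD by auto
  have cardG: "card G = (\<Sum>V\<in>U. card (Gset (D - V) xs))"
  proof -
    have "card G = (\<Sum>V\<in>U. card {f \<in> G. Uf f = V})"
      unfolding part[symmetric]
    proof -
      have "card (\<Union>V\<in>U. {f \<in> G. Uf f = V}) = (\<Sum>V\<in>U. card {f \<in> G. Uf f = V})"
      proof (rule card_UN_disjoint[OF finU])
        show "\<forall>V\<in>U. finite {f \<in> G. Uf f = V}" using finite_Gset[OF finD] unfolding G_def by auto
        show "\<forall>V\<in>U. \<forall>V'\<in>U. V \<noteq> V' \<longrightarrow> {f \<in> G. Uf f = V} \<inter> {f \<in> G. Uf f = V'} = {}" by blast
      qed
      thus "card G = (\<Sum>V\<in>U. card {f \<in> G. Uf f = V})" using part by simp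
    qed
    also have "\<dots> = (\<Sum>V\<in>U. card (Gset (D - V) xs))"
      by (rule sum.cong) (auto intro: bij_betw_same_card[OF bij])
    finally show ?thesis .
  qed
  have each: "card (Gset (D - V) xs) * (\<Prod>x\<leftarrow>xs. fact x) = fact (card D - x)" if V: "V \<in> U" for V
  proof -
    have VD: "V \<subseteq> D" and cV: "card V = x" using V unfolding U_def by auto
    have cDV: "card (D - V) = card D - x" using card_Diff_subset[OF finite_subset[OF VD finD] VD] cV by simp
    have "sum_list xs = card (D - V)" using snoc.prems cDV by simp
    thus ?thesis using snoc.IH[of "D - V"] finD cDV by simp
  qed
  have "card G * (\<Prod>x\<leftarrow>xs @ [x]. fact x) = (\<Sum>V\<in>U. card (Gset (D - V) xs) * (\<Prod>x\<leftarrow>xs. fact x)) * fact x"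
    unfolding cardG by (simp add: sum_distrib_right mult.assoc)
  also have "\<dots> = (\<Sum>V\<in>U. fact (card D - x)) * fact x"
    using each by simp
  also have "\<dots> = (card D choose x) * fact (card D - x) * fact x"
    unfolding U_def using n_subsets[OF finD, of x] by simp
  also have "\<dots> = fact (card D)" using binomial_fact_lemma[OF xle] by (simp add: algebra_simps)
  finally show ?case unfolding G_def .
qed

lemma Gset_mult:
  assumes "finite D" "sum_list xs = card D"
  shows "int (card (Gset D xs)) = multinomial (card D) xs"
proof -
  have "(\<Prod>x\<leftarrow>xs. fact x) > (0::nat)"
    by (induction xs) auto
  thus ?thesis using Gset_count[OF assms] unfolding multinomial_def
    by (metis nonzero_mult_div_cancel_right not_less0 zero_less_iff_neq_zero)
qed


definition Aset :: "nat \<Rightarrow> nat \<Rightarrow> (nat \<Rightarrow> nat) set" where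
  "Aset m j = {a \<in> {..<m} \<rightarrow>\<^sub>E {0..j}. {1..j} \<subseteq> a ` {..<m}}"

definition fib :: "nat \<Rightarrow> (nat \<Rightarrow> nat) \<Rightarrow> nat \<Rightarrow> nat list" where
  "fib m a j = map (\<lambda>l. card {i. i < m \<and> a i = l}) [0..<j+1]"

definition PS :: "nat \<Rightarrow> nat \<Rightarrow> (nat \<times> (nat \<Rightarrow> nat) \<times> (nat \<Rightarrow> nat)) set" where
  "PS m n = Sigma {0..min m n} (\<lambda>j. Aset m j \<times> Aset n j)"

lemma validP_Aset: "validP m n j a b \<longleftrightarrow> a \<in> Aset m j \<and> b \<in> Aset n j"
  unfolding validP_def Aset_def by blast

lemma finite_Aset: "finite (Aset m j)"
  unfolding Aset_def by (rule finite_subset[of _ "{..<m} \<rightarrow>\<^sub>E {0..j}"]) (auto intro: finite_PiE)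

lemma finite_PS: "finite (PS m n)"
  unfolding PS_def using finite_Aset by (intro finite_SigmaI) auto

lemma strong_UN: "{A. strong_lonesum m n A} = (\<Union>p\<in>PS m n. {A. fits m n (fst p) (fst (snd p)) (snd (snd p)) A})"
proof
  show "{A. strong_lonesum m n A} \<subseteq> (\<Union>p\<in>PS m n. {A. fits m n (fst p) (fst (snd p)) (snd (snd p)) A})"
  proof
    fix A assume "A \<in> {A. strong_lonesum m n A}"
    hence s: "strong_lonesum m n A" by simp
    have t: "A \<in> ternary_matrices m n" using s unfolding strong_lonesum_def by simp
    have g: "good m n A" using strong_good[OF s] .
    have v: "validP m n (lj m n A) (la m n A) (lb m n A)" using existence_valid[OF t g] .
    have f: "fits m n (lj m n A) (la m n A) (lb m n A) A" using existence_fits[OF t g] .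
    have bd: "lj m n A \<le> min m n" using existence_bound[OF t g] .
    have "(lj m n A, la m n A, lb m n A) \<in> PS m n" using v bd unfolding PS_def validP_Aset by auto
    thus "A \<in> (\<Union>p\<in>PS m n. {A. fits m n (fst p) (fst (snd p)) (snd (snd p)) A})" using f by force
  qed
  show "(\<Union>p\<in>PS m n. {A. fits m n (fst p) (fst (snd p)) (snd (snd p)) A}) \<subseteq> {A. strong_lonesum m n A}"
  proof
    fix A assume "A \<in> (\<Union>p\<in>PS m n. {A. fits m n (fst p) (fst (snd p)) (snd (snd p)) A})"
    then obtain j a b where p: "(j, a, b) \<in> PS m n" "fits m n j a b A" by auto
    have "validP m n j a b" using p(1) unfolding PS_def validP_Aset by auto
    thus "A \<in> {A. strong_lonesum m n A}" using fits_strong p(2) by auto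
  qed
qed

lemma card_strong_sum:
  "card {A. strong_lonesum m n A} = (\<Sum>p\<in>PS m n. card {A. fits m n (fst p) (fst (snd p)) (snd (snd p)) A})"
  unfolding strong_UN
proof (rule card_UN_disjoint[OF finite_PS])
  show "\<forall>p\<in>PS m n. finite {A. fits m n (fst p) (fst (snd p)) (snd (snd p)) A}"
  proof
    fix p assume "p \<in> PS m n"
    hence "validP m n (fst p) (fst (snd p)) (snd (snd p))" unfolding PS_def validP_Aset by auto
    thus "finite {A. fits m n (fst p) (fst (snd p)) (snd (snd p)) A}" by (rule finite_fits)
  qed
  show "\<forall>p\<in>PS m n. \<forall>q\<in>PS m n. p \<noteq> q \<longrightarrow>
    {A. fits m n (fst p) (fst (snd p)) (snd (snd p)) A} \<inter> {A. fits m n (fst q) (fst (snd q)) (snd (snd q)) A} = {}"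
  proof (intro ballI impI)
    fix p q assume pq: "p \<in> PS m n" "q \<in> PS m n" "p \<noteq> q"
    have vp: "validP m n (fst p) (fst (snd p)) (snd (snd p))" using pq(1) unfolding PS_def validP_Aset by auto
    have vq: "validP m n (fst q) (fst (snd q)) (snd (snd q))" using pq(2) unfolding PS_def validP_Aset by auto
    {
      fix A assume A: "fits m n (fst p) (fst (snd p)) (snd (snd p)) A" "fits m n (fst q) (fst (snd q)) (snd (snd q)) A"
      have "fst p = lj m n A" "fst (snd p) = la m n A" "snd (snd p) = lb m n A"
        using uniq_j[OF vp A(1)] uniq_a[OF vp A(1)] uniq_b[OF vp A(1)] by auto
      moreover have "fst q = lj m n A" "fst (snd q) = la m n A" "snd (snd q) = lb m n A"
        using uniq_j[OF vq A(2)] uniq_a[OF vq A(2)] uniq_b[OF vq A(2)] by auto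
      ultimately have "p = q" by (simp add: prod_eq_iff)
      hence False using pq by simp
    }
    thus "{A. fits m n (fst p) (fst (snd p)) (snd (snd p)) A} \<inter> {A. fits m n (fst q) (fst (snd q)) (snd (snd q)) A} = {}"
      by blast
  qed
qed

definition Qf :: "nat \<Rightarrow> nat list \<Rightarrow> nat list \<Rightarrow> int" where
  "Qf j ms ns = (\<Prod>l\<in>{1..j}. f3 (ms ! l) (ns ! (j + 1 - l)))"

lemma fib_nth: "l \<le> j \<Longrightarrow> fib m a j ! l = card {i. i < m \<and> a i = l}"
  unfolding fib_def by (simp add: nth_append del: upt_Suc)

lemma prod_fib: "(\<Prod>l\<in>{1..j}. f3 (card {i. i < m \<and> a i = l}) (card {k. k < n \<and> b k = j + 1 - l}))
   = Qf j (fib m a j) (fib n b j)"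
  unfolding Qf_def by (rule prod.cong) (auto simp: fib_nth)

lemma card_PS_sum:
  "int (card {A. strong_lonesum m n A}) =
   (\<Sum>j\<in>{0..min m n}. \<Sum>a\<in>Aset m j. \<Sum>b\<in>Aset n j. Qf j (fib m a j) (fib n b j))"
proof -
  have "int (card {A. strong_lonesum m n A}) = (\<Sum>p\<in>PS m n. int (card {A. fits m n (fst p) (fst (snd p)) (snd (snd p)) A}))"
    unfolding card_strong_sum by (simp add: of_nat_sum)
  also have "\<dots> = (\<Sum>p\<in>PS m n. Qf (fst p) (fib m (fst (snd p)) (fst p)) (fib n (snd (snd p)) (fst p)))"
  proof (rule sum.cong)
    fix p assume "p \<in> PS m n"
    hence "validP m n (fst p) (fst (snd p)) (snd (snd p))" unfolding PS_def validP_Aset by auto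
    thus "int (card {A. fits m n (fst p) (fst (snd p)) (snd (snd p)) A}) = Qf (fst p) (fib m (fst (snd p)) (fst p)) (fib n (snd (snd p)) (fst p))"
      using card_fits prod_fib by simp
  qed simp
  also have "\<dots> = (\<Sum>j\<in>{0..min m n}. \<Sum>ab\<in>Aset m j \<times> Aset n j. Qf j (fib m (fst ab) j) (fib n (snd ab) j))"
    unfolding PS_def by (subst sum.Sigma) (auto simp: finite_Aset split_def)
  also have "\<dots> = (\<Sum>j\<in>{0..min m n}. \<Sum>a\<in>Aset m j. \<Sum>b\<in>Aset n j. Qf j (fib m a j) (fib n b j))"
    by (rule sum.cong) (simp_all add: sum.cartesian_product split_def)
  finally show ?thesis .
qed

lemma sum_group_card:
  fixes g :: "'b \<Rightarrow> int"
  assumes "finite X" "finite Y" "h ` X \<subseteq> Y"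
  shows "(\<Sum>x\<in>X. g (h x)) = (\<Sum>y\<in>Y. int (card {x \<in> X. h x = y}) * g y)"
proof -
  have "(\<Sum>x\<in>X. g (h x)) = (\<Sum>y\<in>Y. \<Sum>x\<in>{x \<in> X. h x = y}. g (h x))"
    using sum.group[OF assms, of "\<lambda>x. g (h x)"] by simp
  also have "\<dots> = (\<Sum>y\<in>Y. int (card {x \<in> X. h x = y}) * g y)"
    by (rule sum.cong) auto
  finally show ?thesis .
qed

lemma finite_S_set: "finite (S_set l j)"
proof -
  have "S_set l j \<subseteq> {xs. set xs \<subseteq> {0..l} \<and> length xs = j + 1}"
  proof
    fix xs assume xs: "xs \<in> S_set l j"
    have "\<forall>x\<in>set xs. x \<le> l"
    proof
      fix x assume "x \<in> set xs"
      hence "x \<le> sum_list xs" by (rule member_le_sum_list) simp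
      thus "x \<le> l" using xs unfolding S_set_def by simp
    qed
    thus "xs \<in> {xs. set xs \<subseteq> {0..l} \<and> length xs = j + 1}" using xs unfolding S_set_def by auto
  qed
  moreover have "finite {xs. set xs \<subseteq> {0..l} \<and> length xs = j + 1}"
    by (rule finite_lists_length_eq) simp
  ultimately show ?thesis by (rule finite_subset)
qed

lemma fib_sum: "a \<in> {..<m} \<rightarrow>\<^sub>E {0..j} \<Longrightarrow> sum_list (fib m a j) = m"
proof -
  assume a: "a \<in> {..<m} \<rightarrow>\<^sub>E {0..j}"
  have "sum_list (fib m a j) = (\<Sum>l\<in>{0..<j+1}. card {i. i < m \<and> a i = l})"
    unfolding fib_def by (simp add: interv_sum_list_conv_sum_set_nat del: upt_Suc)
  also have "\<dots> = (\<Sum>l\<in>{0..<j+1}. \<Sum>i\<in>{i \<in> {..<m}. a i = l}. (1::nat))"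
    by (rule sum.cong) auto
  also have "\<dots> = (\<Sum>i\<in>{..<m}. (1::nat))"
  proof (rule sum.group)
    show "a ` {..<m} \<subseteq> {0..<j + 1}"
    proof
      fix y assume "y \<in> a ` {..<m}"
      then obtain i where "i < m" "y = a i" by auto
      thus "y \<in> {0..<j + 1}" using PiE_mem[OF a, of i] by auto
    qed
  qed auto
  finally show ?thesis by simp
qed

lemma fib_S: "a \<in> Aset m j \<Longrightarrow> fib m a j \<in> S_set m j"
proof -
  assume a: "a \<in> Aset m j"
  have aP: "a \<in> {..<m} \<rightarrow>\<^sub>E {0..j}" and su: "{1..j} \<subseteq> a ` {..<m}" using a unfolding Aset_def by auto
  have "\<forall>i\<in>{1..j}. 1 \<le> fib m a j ! i"
  proof
    fix l assume l: "l \<in> {1..j}"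
    then obtain i where "i < m" "a i = l" using su by force
    hence "{i. i < m \<and> a i = l} \<noteq> {}" by auto
    hence "card {i. i < m \<and> a i = l} \<ge> 1" by (simp add: Suc_leI card_gt_0_iff)
    thus "1 \<le> fib m a j ! l" using l fib_nth by simp
  qed
  moreover have "length (fib m a j) = j + 1" unfolding fib_def by simp
  ultimately show ?thesis unfolding S_set_def using fib_sum[OF aP] by auto
qed

lemma card_fib_fiber:
  assumes "ms \<in> S_set m j"
  shows "int (card {a \<in> Aset m j. fib m a j = ms}) = multinomial m ms"
proof -
  have len: "length ms = j + 1" and sm: "sum_list ms = m" and pos: "\<forall>i\<in>{1..j}. 1 \<le> ms ! i"
    using assms unfolding S_set_def by auto
  have e: "{a \<in> Aset m j. fib m a j = ms} = Gset {..<m} ms"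
  proof (rule set_eqI)
    fix a
    have fe: "fib m a j = ms \<longleftrightarrow> (\<forall>l<j+1. card {i. i < m \<and> a i = l} = ms ! l)"
      using len by (auto simp: list_eq_iff_nth_eq fib_nth fib_def[of m a j] simp del: upt_Suc)
    show "a \<in> {a \<in> Aset m j. fib m a j = ms} \<longleftrightarrow> a \<in> Gset {..<m} ms"
    proof
      assume "a \<in> {a \<in> Aset m j. fib m a j = ms}"
      hence aP: "a \<in> {..<m} \<rightarrow>\<^sub>E {0..j}" and f: "\<forall>l<j+1. card {i. i < m \<and> a i = l} = ms ! l"
        unfolding Aset_def using fe by auto
      have "{0..j} = {..<length ms}" using len by auto
      thus "a \<in> Gset {..<m} ms" unfolding Gset_def using aP f len by auto
    next
      assume "a \<in> Gset {..<m} ms"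
      hence aP: "a \<in> {..<m} \<rightarrow>\<^sub>E {..<j+1}" and f: "\<forall>l<j+1. card {i. i < m \<and> a i = l} = ms ! l"
        unfolding Gset_def using len by auto
      have aP': "a \<in> {..<m} \<rightarrow>\<^sub>E {0..j}" using aP by (simp add: atLeast0AtMost lessThan_Suc_atMost)
      have "{1..j} \<subseteq> a ` {..<m}"
      proof
        fix l assume l: "l \<in> {1..j}"
        hence "card {i. i < m \<and> a i = l} \<ge> 1" using f pos by auto
        hence "{i. i < m \<and> a i = l} \<noteq> {}" by (intro notI) simp
        thus "l \<in> a ` {..<m}" by auto
      qed
      thus "a \<in> {a \<in> Aset m j. fib m a j = ms}" unfolding Aset_def using aP' f fe by auto
    qed
  qed
  show ?thesis unfolding e using Gset_mult[of "{..<m}" ms] sm by simp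
qed

lemma inner_j:
  "(\<Sum>a\<in>Aset m j. \<Sum>b\<in>Aset n j. Qf j (fib m a j) (fib n b j)) =
   (\<Sum>ms\<in>S_set m j. \<Sum>ns\<in>S_set n j. multinomial m ms * multinomial n ns * Qf j ms ns)"
proof -
  have "(\<Sum>a\<in>Aset m j. \<Sum>b\<in>Aset n j. Qf j (fib m a j) (fib n b j)) =
        (\<Sum>a\<in>Aset m j. \<Sum>ns\<in>S_set n j. int (card {b \<in> Aset n j. fib n b j = ns}) * Qf j (fib m a j) ns)"
    by (rule sum.cong[OF refl], rule sum_group_card) (auto simp: finite_Aset finite_S_set fib_S)
  also have "\<dots> = (\<Sum>a\<in>Aset m j. (\<lambda>ms. \<Sum>ns\<in>S_set n j. multinomial n ns * Qf j ms ns) (fib m a j))"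
    by (rule sum.cong[OF refl], rule sum.cong[OF refl]) (simp add: card_fib_fiber)
  also have "\<dots> = (\<Sum>ms\<in>S_set m j. int (card {a \<in> Aset m j. fib m a j = ms}) * (\<Sum>ns\<in>S_set n j. multinomial n ns * Qf j ms ns))"
    by (rule sum_group_card) (auto simp: finite_Aset finite_S_set fib_S)
  also have "\<dots> = (\<Sum>ms\<in>S_set m j. \<Sum>ns\<in>S_set n j. multinomial m ms * multinomial n ns * Qf j ms ns)"
    by (rule sum.cong[OF refl]) (simp add: card_fib_fiber sum_distrib_left mult.assoc)
  finally show ?thesis .
qed

lemma S_set_0: "S_set l 0 = {[l]}"
proof (rule set_eqI)
  fix xs
  show "xs \<in> S_set l 0 \<longleftrightarrow> xs \<in> {[l]}"
  proof
    assume "xs \<in> S_set l 0"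
    hence "length xs = 1" "sum_list xs = l" unfolding S_set_def by auto
    thus "xs \<in> {[l]}" by (cases xs) auto
  qed (simp add: S_set_def)
qed

theorem theorem3p5:
  fixes m n :: nat
  assumes "1 \<le> m" and "1 \<le> n"
  shows "int (num_strong_lonesum m n) =
    1 + (\<Sum>j\<in>{1..min m n}. \<Sum>ms\<in>S_set m j. \<Sum>ns\<in>S_set n j.
           multinomial m ms * multinomial n ns *
           (\<Prod>i\<in>{1..j}. f3 (ms ! i) (ns ! (j + 1 - i))))"
proof -
  have "int (num_strong_lonesum m n) =
     (\<Sum>j\<in>{0..min m n}. \<Sum>ms\<in>S_set m j. \<Sum>ns\<in>S_set n j. multinomial m ms * multinomial n ns * Qf j ms ns)"
    unfolding num_strong_lonesum_def card_PS_sum by (rule sum.cong[OF refl]) (rule inner_j)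
  also have "{0..min m n} = insert 0 {1..min m n}" by auto
  also have "(\<Sum>j\<in>insert 0 {1..min m n}. \<Sum>ms\<in>S_set m j. \<Sum>ns\<in>S_set n j. multinomial m ms * multinomial n ns * Qf j ms ns)
     = (\<Sum>ms\<in>S_set m 0. \<Sum>ns\<in>S_set n 0. multinomial m ms * multinomial n ns * Qf 0 ms ns) +
       (\<Sum>j\<in>{1..min m n}. \<Sum>ms\<in>S_set m j. \<Sum>ns\<in>S_set n j. multinomial m ms * multinomial n ns * Qf j ms ns)"
    by (subst sum.insert) auto
  also have "(\<Sum>ms\<in>S_set m 0. \<Sum>ns\<in>S_set n 0. multinomial m ms * multinomial n ns * Qf 0 ms ns) = 1"
    unfolding S_set_0 Qf_def multinomial_def by simp
  finally show ?thesis unfolding Qf_def by simp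
qed


end
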